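(* Let $E$ be a locally complete lcHs over $\mathbb{K}$, let $G\subset E'$ be a separating linear subspace, and let $\mathcal{F}(\Omega)$ and $\mathcal{F}(\Omega,E)$ be $\varepsilon$-into-compatible. Let $(T^{E},T^{\mathbb{K}})$ be a consistent and strong family for $(\mathcal{F},E)$, $\nu\colon\omega\to(0,\infty)$ a weight, and suppose $\mathcal{F}\nu(\Omega)$ is a Banach space whose closed unit ball $B_{\mathcal{F}\nu}$ is a compact subset of $\mathcal{F}(\Omega)$. Let $U\subset\omega$ fix the topology in $\mathcal{F}\nu(\Omega)$. Then for every $f\in\mathcal{F}\nu_{G}(U,E)$ such that $\{f(x)\nu(x): x\in U\}$ is bounded in $E$ there exists $F\in\mathcal{F}_{\varepsilon}\nu(\Omega,E)$ with $T^{E}(F)(x)=f(x)$ for all $x\in U$; i.e. the restriction map $R_{U,G}\colon\mathcal{F}_\varepsilon\nu(\Omega,E)\to\mathcal{F}\nu_G(U,E)_{lb}$, $F\mapsto(T^E(F)(x))_{x\in U}$, is surjective.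
   Context: $\mathbb{K}\in\{\mathbb{R},\mathbb{C}\}$; "lcHs" means locally convex Hausdorff space over $\mathbb{K}$; $E$ carries a directed fundamental system of seminorms $(p_\alpha)_{\alpha\in\mathfrak{A}}$ and $E'$ is its dual. $E$ is locally complete if for every closed bounded absolutely convex $D\subset E$ the space $\bigcup_n nD$ normed by the gauge of $D$ is a Banach space. A subspace $G\subset E'$ is separating if $e'(x)=0$ for all $e'\in G$ implies $x=0$. Framework: Let $\Omega,\omega$ be non-empty sets. For an lcHs $F$, $F'_\kappa$ is $F'$ with the topology of uniform convergence on absolutely convex compact subsets of $F$, and $F\varepsilon E:=L_e(F'_\kappa,E)$ is the space of continuous linear maps $F'_\kappa\to E$ with the topology of uniform convergence on equicontinuous subsets of $F'$. Let $\mathcal{F}(\Omega)\subset\mathbb{K}^\Omega$ and $\mathcal{F}(\Omega,E)\subset E^\Omega$ be linear subspaces carrying locally convex Hausdorff topologies with $\delta_x\in\mathcal{F}(\Omega)'$ for all $x\in\Omega$. Define $S\colon\mathcal{F}(\Omega)\varepsilon E\to E^\Omega$, $S(u)(x):=u(\delta_x)$. The spaces are $\varepsilon$-into-compatible if $S$ maps into $\mathcal{F}(\Omega,E)$ and is a linear topological isomorphism onto its range. Let $T^{\mathbb{K}}\colon\mathcal{F}(\Omega)\to\mathbb{K}^\omega$ and $T^{E}\colon\mathcal{F}(\Omega,E)\to E^\omega$ be linear and $T^{\mathbb{K}}_x:=\delta_x\circ T^{\mathbb{K}}$. $(T^E,T^{\mathbb{K}})$ is consistent for $(\mathcal{F},E)$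 if for every $u\in\mathcal{F}(\Omega)\varepsilon E$ we have $S(u)\in\mathcal{F}(\Omega,E)$ and for all $x\in\omega$: $T^{\mathbb{K}}_x\in\mathcal{F}(\Omega)'$ and $T^{E}(S(u))(x)=u(T^{\mathbb{K}}_x)$. It is strong for $(\mathcal{F},E)$ if for all $e'\in E'$, $f\in\mathcal{F}(\Omega,E)$: $e'\circ f\in\mathcal{F}(\Omega)$ and $T^{\mathbb{K}}(e'\circ f)(x)=e'(T^E(f)(x))$ for all $x\in\omega$. For a weight $\nu\colon\omega\to(0,\infty)$ set $\mathcal{F}\nu(\Omega,E):=\{f\in\mathcal{F}(\Omega,E): |f|_\alpha:=\sup_{x\in\omega}p_\alpha(T^E(f)(x))\nu(x)<\infty\ \forall\alpha\}$ with the topology of these seminorms, and $\mathcal{F}\nu(\Omega):=\{f\in\mathcal{F}(\Omega): |f|_{\mathcal{F}\nu}:=\sup_{x\in\omega}|T^{\mathbb{K}}(f)(x)|\nu(x)<\infty\}$. Let $B_{\mathcal{F}\nu}$ be the closed unit ball of $\mathcal{F}\nu(\Omega)$, $B^{\circ\mathcal{F}'}_{\mathcal{F}\nu}:=\{y'\in\mathcal{F}(\Omega)':|y'(f)|\le1\ \forall f\in B_{\mathcal{F}\nu}\}$ and $\mathcal{F}_\varepsilon\nu(\Omega,E):=S(\{u\in\mathcal{F}(\Omega)\varepsilon E: u(B^{\circ\mathcal{F}'}_{\mathcal{F}\nu})\text{ is bounded in }E\})$. A set $U\subset\omega$ fixes the topology in $\mathcal{F}\nu(\Omega)$ if there is $C>0$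 with $|f|_{\mathcal{F}\nu}\le C\sup_{x\in U}|T^{\mathbb{K}}(f)(x)|\nu(x)$ for all $f\in\mathcal{F}\nu(\Omega)$. $\mathcal{F}\nu_G(U,E)$ is the space of functions $f\colon U\to E$ such that for every $e'\in G$ there is $f_{e'}\in\mathcal{F}\nu(\Omega)$ with $T^{\mathbb{K}}(f_{e'})(x)=e'(f(x))$ for all $x\in U$; $\mathcal{F}\nu_G(U,E)_{lb}$ is the subspace of those $f$ for which $\{f(x)\nu(x):x\in U\}$ is bounded in $E$. *)

theory Defs
  imports "HOL-Analysis.Analysis" "HOL-Library.Function_Algebras"
begin

(* Scalars: 'k :: {real_normed_field, euclidean_space}; a finite-dimensional real normed
   field is (isometrically) R or C, so this encodes K in {R, C}.
   A locally convex Hausdorff space is encoded as a linear subspace V of a 'k-vector space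
   (scalar multiplication sc) together with a family q of seminorms on V that
   separates points; all topological notions are the ones induced by the seminorms. *)

definition fscale :: "('k \<Rightarrow> 'b \<Rightarrow> 'b) \<Rightarrow> 'k \<Rightarrow> ('a \<Rightarrow> 'b) \<Rightarrow> ('a \<Rightarrow> 'b)" where
  "fscale sc c f = (\<lambda>x. sc c (f x))"

definition lin_subspace :: "('k::field \<Rightarrow> 'v::ab_group_add \<Rightarrow> 'v) \<Rightarrow> 'v set \<Rightarrow> bool" where
  "lin_subspace sc V \<longleftrightarrow> 0 \<in> V \<and> (\<forall>x\<in>V. \<forall>y\<in>V. x + y \<in> V) \<and> (\<forall>c. \<forall>x\<in>V. sc c x \<in> V)"

definition is_seminorm_on :: "('k::real_normed_field \<Rightarrow> 'v::ab_group_add \<Rightarrow> 'v) \<Rightarrow> 'v set \<Rightarrow> ('v \<Rightarrow> real) \<Rightarrow> bool" where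
  "is_seminorm_on sc V q \<longleftrightarrow> (\<forall>x\<in>V. \<forall>y\<in>V. q (x + y) \<le> q x + q y) \<and> (\<forall>c. \<forall>x\<in>V. q (sc c x) = norm c * q x)"

definition lcHs :: "('k::real_normed_field \<Rightarrow> 'v::ab_group_add \<Rightarrow> 'v) \<Rightarrow> 'v set \<Rightarrow> ('i \<Rightarrow> 'v \<Rightarrow> real) \<Rightarrow> bool" where
  "lcHs sc V q \<longleftrightarrow> lin_subspace sc V \<and> (\<forall>i. is_seminorm_on sc V (q i)) \<and> (\<forall>x\<in>V. (\<forall>i. q i x = 0) \<longrightarrow> x = 0)"

definition directed_family :: "('i \<Rightarrow> 'v \<Rightarrow> real) \<Rightarrow> 'v set \<Rightarrow> bool" where
  "directed_family q V \<longleftrightarrow> (\<forall>i j. \<exists>k. \<forall>x\<in>V. max (q i x) (q j x) \<le> q k x)"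

definition lin_on :: "('k \<Rightarrow> 'v::plus \<Rightarrow> 'v) \<Rightarrow> ('k \<Rightarrow> 'w::plus \<Rightarrow> 'w) \<Rightarrow> 'v set \<Rightarrow> ('v \<Rightarrow> 'w) \<Rightarrow> bool" where
  "lin_on sc1 sc2 V T \<longleftrightarrow> (\<forall>x\<in>V. \<forall>y\<in>V. T (x + y) = T x + T y) \<and> (\<forall>c. \<forall>x\<in>V. T (sc1 c x) = sc2 c (T x))"

text \<open>Continuity (of a map, linear in applications) between seminormed spaces.\<close>
definition sn_cont :: "'v set \<Rightarrow> ('i \<Rightarrow> 'v \<Rightarrow> real) \<Rightarrow> ('j \<Rightarrow> 'w \<Rightarrow> real) \<Rightarrow> ('v \<Rightarrow> 'w) \<Rightarrow> bool" where
  "sn_cont V q r T \<longleftrightarrow> (\<forall>j. \<exists>J C. finite J \<and> (\<forall>x\<in>V. r j (T x) \<le> C * (\<Sum>i\<in>J. q i x)))"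

definition sn_bounded :: "'v set \<Rightarrow> ('i \<Rightarrow> 'v \<Rightarrow> real) \<Rightarrow> 'v set \<Rightarrow> bool" where
  "sn_bounded V q B \<longleftrightarrow> B \<subseteq> V \<and> (\<forall>i. \<exists>C. \<forall>x\<in>B. q i x \<le> C)"

definition sn_open :: "'v::ab_group_add set \<Rightarrow> ('i \<Rightarrow> 'v \<Rightarrow> real) \<Rightarrow> 'v set \<Rightarrow> bool" where
  "sn_open V q U \<longleftrightarrow> U \<subseteq> V \<and>
     (\<forall>x\<in>U. \<exists>J \<epsilon>. finite J \<and> \<epsilon> > 0 \<and> {y\<in>V. (\<Sum>i\<in>J. q i (y - x)) < \<epsilon>} \<subseteq> U)"

definition sn_closed :: "'v::ab_group_add set \<Rightarrow> ('i \<Rightarrow> 'v \<Rightarrow> real) \<Rightarrow> 'v set \<Rightarrow> bool" where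
  "sn_closed V q D \<longleftrightarrow> D \<subseteq> V \<and> sn_open V q (V - D)"

definition sn_compact :: "'v::ab_group_add set \<Rightarrow> ('i \<Rightarrow> 'v \<Rightarrow> real) \<Rightarrow> 'v set \<Rightarrow> bool" where
  "sn_compact V q K \<longleftrightarrow> K \<subseteq> V \<and>
     (\<forall>\<U>. (\<forall>W\<in>\<U>. sn_open V q W) \<and> K \<subseteq> \<Union>\<U> \<longrightarrow> (\<exists>\<V>\<subseteq>\<U>. finite \<V> \<and> K \<subseteq> \<Union>\<V>))"

definition abs_convex :: "('k::real_normed_field \<Rightarrow> 'v::ab_group_add \<Rightarrow> 'v) \<Rightarrow> 'v set \<Rightarrow> bool" where
  "abs_convex sc K \<longleftrightarrow> (\<forall>x\<in>K. \<forall>y\<in>K. \<forall>a b. norm a + norm b \<le> 1 \<longrightarrow> sc a x + sc b y \<in> K)"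

definition sn_dual :: "('k::real_normed_field \<Rightarrow> 'v::ab_group_add \<Rightarrow> 'v) \<Rightarrow> 'v set \<Rightarrow> ('i \<Rightarrow> 'v \<Rightarrow> real) \<Rightarrow> ('v \<Rightarrow> 'k) set" where
  "sn_dual sc V q = {y. lin_on sc (*) V y \<and> sn_cont V q (\<lambda>_::unit. norm) y \<and> (\<forall>x. x \<notin> V \<longrightarrow> y x = 0)}"

definition sn_banach :: "('k::real_normed_field \<Rightarrow> 'v::ab_group_add \<Rightarrow> 'v) \<Rightarrow> 'v set \<Rightarrow> ('v \<Rightarrow> real) \<Rightarrow> bool" where
  "sn_banach sc V \<mu> \<longleftrightarrow> lin_subspace sc V \<and> is_seminorm_on sc V \<mu> \<and> (\<forall>x\<in>V. \<mu> x = 0 \<longrightarrow> x = 0) \<and>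
     (\<forall>s. (\<forall>n. s n \<in> V) \<and> (\<forall>\<epsilon>>0. \<exists>N. \<forall>m\<ge>N. \<forall>n\<ge>N. \<mu> (s m - s n) < \<epsilon>)
          \<longrightarrow> (\<exists>x\<in>V. (\<lambda>n. \<mu> (s n - x)) \<longlonglongrightarrow> 0))"

definition gauge_fn :: "('k::real_normed_field \<Rightarrow> 'v \<Rightarrow> 'v) \<Rightarrow> 'v set \<Rightarrow> 'v \<Rightarrow> real" where
  "gauge_fn sc D x = Inf {t::real. t > 0 \<and> x \<in> sc (of_real t) ` D}"

definition locally_complete :: "('k::real_normed_field \<Rightarrow> 'v::ab_group_add \<Rightarrow> 'v) \<Rightarrow> ('a \<Rightarrow> 'v \<Rightarrow> real) \<Rightarrow> bool" where
  "locally_complete sc p \<longleftrightarrow> (\<forall>D. D \<noteq> {} \<and> sn_closed UNIV p D \<and> sn_bounded UNIV p D \<and> abs_convex sc D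
      \<longrightarrow> sn_banach sc (\<Union>n::nat. sc (of_nat n) ` D) (gauge_fn sc D))"

definition separating :: "('v::zero \<Rightarrow> 'k::zero) set \<Rightarrow> bool" where
  "separating G \<longleftrightarrow> (\<forall>x. (\<forall>e'\<in>G. e' x = 0) \<longrightarrow> x = 0)"

text \<open>Seminorms of F(Omega)'_kappa, indexed by subsets K (only absolutely convex compact K count).\<close>
definition kappa_sn :: "('w \<Rightarrow> 'k::{real_normed_field}) set \<Rightarrow> ('i \<Rightarrow> ('w \<Rightarrow> 'k) \<Rightarrow> real)
    \<Rightarrow> ('w \<Rightarrow> 'k) set \<Rightarrow> (('w \<Rightarrow> 'k) \<Rightarrow> 'k) \<Rightarrow> real" where
  "kappa_sn Fs qF K y = (if sn_compact Fs qF K \<and> abs_convex (fscale (*)) K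
       then Sup (insert 0 ((\<lambda>f. norm (y f)) ` K)) else 0)"

definition Fdual :: "('w \<Rightarrow> 'k::real_normed_field) set \<Rightarrow> ('i \<Rightarrow> ('w \<Rightarrow> 'k) \<Rightarrow> real) \<Rightarrow> (('w \<Rightarrow> 'k) \<Rightarrow> 'k) set" where
  "Fdual Fs qF = sn_dual (fscale (*)) Fs qF"

text \<open>F(Omega) epsilon E = L(F(Omega)'_kappa, E) (maps extended by 0 outside the dual).\<close>
definition eps_prod :: "('k::real_normed_field \<Rightarrow> 'e::ab_group_add \<Rightarrow> 'e) \<Rightarrow> ('a \<Rightarrow> 'e \<Rightarrow> real)
    \<Rightarrow> ('w \<Rightarrow> 'k) set \<Rightarrow> ('i \<Rightarrow> ('w \<Rightarrow> 'k) \<Rightarrow> real) \<Rightarrow> ((('w \<Rightarrow> 'k) \<Rightarrow> 'k) \<Rightarrow> 'e) set" where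
  "eps_prod smul p Fs qF = {u. lin_on (fscale (*)) smul (Fdual Fs qF) u
      \<and> sn_cont (Fdual Fs qF) (kappa_sn Fs qF) p u \<and> (\<forall>y. y \<notin> Fdual Fs qF \<longrightarrow> u y = 0)}"

definition equicont :: "('w \<Rightarrow> 'k::real_normed_field) set \<Rightarrow> ('i \<Rightarrow> ('w \<Rightarrow> 'k) \<Rightarrow> real) \<Rightarrow> (('w \<Rightarrow> 'k) \<Rightarrow> 'k) set \<Rightarrow> bool" where
  "equicont Fs qF M \<longleftrightarrow> M \<subseteq> Fdual Fs qF \<and>
     (\<exists>J C. finite J \<and> (\<forall>y\<in>M. \<forall>f\<in>Fs. norm (y f) \<le> C * (\<Sum>i\<in>J. qF i f)))"

text \<open>Seminorms of F(Omega) epsilon E: uniform convergence on equicontinuous sets.\<close>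
definition eps_sn :: "('w \<Rightarrow> 'k::real_normed_field) set \<Rightarrow> ('i \<Rightarrow> ('w \<Rightarrow> 'k) \<Rightarrow> real) \<Rightarrow> ('a \<Rightarrow> 'e \<Rightarrow> real)
    \<Rightarrow> (('w \<Rightarrow> 'k) \<Rightarrow> 'k) set \<times> 'a \<Rightarrow> ((('w \<Rightarrow> 'k) \<Rightarrow> 'k) \<Rightarrow> 'e) \<Rightarrow> real" where
  "eps_sn Fs qF p Ma u = (if equicont Fs qF (fst Ma)
       then Sup (insert 0 ((\<lambda>y. p (snd Ma) (u y)) ` fst Ma)) else 0)"

definition delta :: "('w \<Rightarrow> 'k::zero) set \<Rightarrow> 'w \<Rightarrow> ('w \<Rightarrow> 'k) \<Rightarrow> 'k" where
  "delta Fs x = (\<lambda>f. if f \<in> Fs then f x else 0)"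

definition S_map :: "('w \<Rightarrow> 'k::zero) set \<Rightarrow> ((('w \<Rightarrow> 'k) \<Rightarrow> 'k) \<Rightarrow> 'e) \<Rightarrow> 'w \<Rightarrow> 'e" where
  "S_map Fs u = (\<lambda>x. u (delta Fs x))"

definition eps_into_compatible :: "('k::real_normed_field \<Rightarrow> 'e::ab_group_add \<Rightarrow> 'e) \<Rightarrow> ('a \<Rightarrow> 'e \<Rightarrow> real)
    \<Rightarrow> ('w \<Rightarrow> 'k) set \<Rightarrow> ('i \<Rightarrow> ('w \<Rightarrow> 'k) \<Rightarrow> real) \<Rightarrow> ('w \<Rightarrow> 'e) set \<Rightarrow> ('j \<Rightarrow> ('w \<Rightarrow> 'e) \<Rightarrow> real) \<Rightarrow> bool" where
  "eps_into_compatible smul p Fs qF FE qFE \<longleftrightarrow>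
     (\<forall>u\<in>eps_prod smul p Fs qF. S_map Fs u \<in> FE)
     \<and> inj_on (S_map Fs) (eps_prod smul p Fs qF)
     \<and> sn_cont (eps_prod smul p Fs qF) (eps_sn Fs qF p) qFE (S_map Fs)
     \<and> (\<forall>j. \<exists>J C. finite J \<and> (\<forall>u\<in>eps_prod smul p Fs qF. eps_sn Fs qF p j u \<le> C * (\<Sum>i\<in>J. qFE i (S_map Fs u))))"

definition TKx :: "('w \<Rightarrow> 'k::zero) set \<Rightarrow> (('w \<Rightarrow> 'k) \<Rightarrow> 'x \<Rightarrow> 'k) \<Rightarrow> 'x \<Rightarrow> ('w \<Rightarrow> 'k) \<Rightarrow> 'k" where
  "TKx Fs TK x = (\<lambda>f. if f \<in> Fs then TK f x else 0)"

definition consistent_fam :: "('k::real_normed_field \<Rightarrow> 'e::ab_group_add \<Rightarrow> 'e) \<Rightarrow> ('a \<Rightarrow> 'e \<Rightarrow> real)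
    \<Rightarrow> ('w \<Rightarrow> 'k) set \<Rightarrow> ('i \<Rightarrow> ('w \<Rightarrow> 'k) \<Rightarrow> real) \<Rightarrow> ('w \<Rightarrow> 'e) set
    \<Rightarrow> (('w \<Rightarrow> 'e) \<Rightarrow> 'x \<Rightarrow> 'e) \<Rightarrow> (('w \<Rightarrow> 'k) \<Rightarrow> 'x \<Rightarrow> 'k) \<Rightarrow> bool" where
  "consistent_fam smul p Fs qF FE TE TK \<longleftrightarrow>
     (\<forall>u\<in>eps_prod smul p Fs qF. S_map Fs u \<in> FE \<and>
        (\<forall>x. TKx Fs TK x \<in> Fdual Fs qF \<and> TE (S_map Fs u) x = u (TKx Fs TK x)))"

definition strong_fam :: "('k::real_normed_field \<Rightarrow> 'e::ab_group_add \<Rightarrow> 'e) \<Rightarrow> ('a \<Rightarrow> 'e \<Rightarrow> real)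
    \<Rightarrow> ('w \<Rightarrow> 'k) set \<Rightarrow> ('w \<Rightarrow> 'e) set
    \<Rightarrow> (('w \<Rightarrow> 'e) \<Rightarrow> 'x \<Rightarrow> 'e) \<Rightarrow> (('w \<Rightarrow> 'k) \<Rightarrow> 'x \<Rightarrow> 'k) \<Rightarrow> bool" where
  "strong_fam smul p Fs FE TE TK \<longleftrightarrow>
     (\<forall>e'\<in>sn_dual smul UNIV p. \<forall>f\<in>FE. e' \<circ> f \<in> Fs \<and> (\<forall>x. TK (e' \<circ> f) x = e' (TE f x)))"

definition Fnu :: "('w \<Rightarrow> 'k::real_normed_field) set \<Rightarrow> (('w \<Rightarrow> 'k) \<Rightarrow> 'x \<Rightarrow> 'k) \<Rightarrow> ('x \<Rightarrow> real) \<Rightarrow> ('w \<Rightarrow> 'k) set" where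
  "Fnu Fs TK \<nu> = {f\<in>Fs. bdd_above (range (\<lambda>x. norm (TK f x) * \<nu> x))}"

definition Fnu_norm :: "(('w \<Rightarrow> 'k::real_normed_field) \<Rightarrow> 'x \<Rightarrow> 'k) \<Rightarrow> ('x \<Rightarrow> real) \<Rightarrow> ('w \<Rightarrow> 'k) \<Rightarrow> real" where
  "Fnu_norm TK \<nu> f = (SUP x. norm (TK f x) * \<nu> x)"

definition ball_Fnu :: "('w \<Rightarrow> 'k::real_normed_field) set \<Rightarrow> (('w \<Rightarrow> 'k) \<Rightarrow> 'x \<Rightarrow> 'k) \<Rightarrow> ('x \<Rightarrow> real) \<Rightarrow> ('w \<Rightarrow> 'k) set" where
  "ball_Fnu Fs TK \<nu> = {f\<in>Fnu Fs TK \<nu>. Fnu_norm TK \<nu> f \<le> 1}"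

definition polar_ball :: "('w \<Rightarrow> 'k::real_normed_field) set \<Rightarrow> ('i \<Rightarrow> ('w \<Rightarrow> 'k) \<Rightarrow> real)
    \<Rightarrow> (('w \<Rightarrow> 'k) \<Rightarrow> 'x \<Rightarrow> 'k) \<Rightarrow> ('x \<Rightarrow> real) \<Rightarrow> (('w \<Rightarrow> 'k) \<Rightarrow> 'k) set" where
  "polar_ball Fs qF TK \<nu> = {y\<in>Fdual Fs qF. \<forall>f\<in>ball_Fnu Fs TK \<nu>. norm (y f) \<le> 1}"

definition F_eps_nu :: "('k::real_normed_field \<Rightarrow> 'e::ab_group_add \<Rightarrow> 'e) \<Rightarrow> ('a \<Rightarrow> 'e \<Rightarrow> real)
    \<Rightarrow> ('w \<Rightarrow> 'k) set \<Rightarrow> ('i \<Rightarrow> ('w \<Rightarrow> 'k) \<Rightarrow> real)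
    \<Rightarrow> (('w \<Rightarrow> 'k) \<Rightarrow> 'x \<Rightarrow> 'k) \<Rightarrow> ('x \<Rightarrow> real) \<Rightarrow> ('w \<Rightarrow> 'e) set" where
  "F_eps_nu smul p Fs qF TK \<nu> =
     S_map Fs ` {u\<in>eps_prod smul p Fs qF. sn_bounded UNIV p (u ` polar_ball Fs qF TK \<nu>)}"

definition fixes_topology :: "('w \<Rightarrow> 'k::real_normed_field) set \<Rightarrow> (('w \<Rightarrow> 'k) \<Rightarrow> 'x \<Rightarrow> 'k) \<Rightarrow> ('x \<Rightarrow> real) \<Rightarrow> 'x set \<Rightarrow> bool" where
  "fixes_topology Fs TK \<nu> U \<longleftrightarrow> (\<exists>C>0. \<forall>f\<in>Fnu Fs TK \<nu>.
      Fnu_norm TK \<nu> f \<le> C * Sup (insert 0 ((\<lambda>x. norm (TK f x) * \<nu> x) ` U)))"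

definition FnuG :: "('w \<Rightarrow> 'k::real_normed_field) set \<Rightarrow> (('w \<Rightarrow> 'k) \<Rightarrow> 'x \<Rightarrow> 'k) \<Rightarrow> ('x \<Rightarrow> real)
    \<Rightarrow> ('e \<Rightarrow> 'k) set \<Rightarrow> 'x set \<Rightarrow> ('x \<Rightarrow> 'e) set" where
  "FnuG Fs TK \<nu> G U = {f. \<forall>e'\<in>G. \<exists>g\<in>Fnu Fs TK \<nu>. \<forall>x\<in>U. TK g x = e' (f x)}"

definition FnuG_lb :: "('k::real_normed_field \<Rightarrow> 'e \<Rightarrow> 'e) \<Rightarrow> ('a \<Rightarrow> 'e \<Rightarrow> real)
    \<Rightarrow> ('w \<Rightarrow> 'k) set \<Rightarrow> (('w \<Rightarrow> 'k) \<Rightarrow> 'x \<Rightarrow> 'k) \<Rightarrow> ('x \<Rightarrow> real)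
    \<Rightarrow> ('e \<Rightarrow> 'k) set \<Rightarrow> 'x set \<Rightarrow> ('x \<Rightarrow> 'e) set" where
  "FnuG_lb smul p Fs TK \<nu> G U = {f\<in>FnuG Fs TK \<nu> G U.
      sn_bounded UNIV p ((\<lambda>x. smul (of_real (\<nu> x)) (f x)) ` U)}"

end

theory Submission
  imports Defs
begin

definition lin_sp :: "('v::real_vector \<Rightarrow> real) \<Rightarrow> 'v set \<Rightarrow> bool" where
  "lin_sp \<rho> V \<longleftrightarrow> (\<forall>u\<in>V. \<forall>v\<in>V. \<rho> (u + v) = \<rho> u + \<rho> v) \<and> (\<forall>c. \<forall>u\<in>V. \<rho> (c *\<^sub>R u) = c * \<rho> u)"

definition sublin :: "('v::real_vector \<Rightarrow> real) \<Rightarrow> 'v set \<Rightarrow> bool" where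
  "sublin r V \<longleftrightarrow> (\<forall>u\<in>V. \<forall>v\<in>V. r (u + v) \<le> r u + r v) \<and> (\<forall>c\<ge>0. \<forall>u\<in>V. r (c *\<^sub>R u) = c * r u)"

lemma hb_step:
  fixes s :: "'v::real_vector"
  assumes sl: "sublin r (span (insert s S))" and lin: "lin_sp \<rho> (span S)"
    and le: "\<forall>m\<in>span S. \<rho> m \<le> r m" and ns: "s \<notin> span S"
  shows "\<exists>\<rho>'. lin_sp \<rho>' (span (insert s S)) \<and> (\<forall>w\<in>span (insert s S). \<rho>' w \<le> r w)"
proof -
  let ?T = "span (insert s S)"
  have sub: "span S \<subseteq> ?T" by (simp add: span_mono subset_insertI)
  have sT: "s \<in> ?T" by (simp add: span_base)
  have radd: "r (u + v) \<le> r u + r v" if "u \<in> ?T" "v \<in> ?T" for u v using sl that unfolding sublin_def by blast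
  have rhom: "r (c *\<^sub>R u) = c * r u" if "c \<ge> 0" "u \<in> ?T" for c u using sl that unfolding sublin_def by blast
  have ladd: "\<rho> (u + v) = \<rho> u + \<rho> v" if "u \<in> span S" "v \<in> span S" for u v using lin that unfolding lin_sp_def by blast
  have lhom: "\<rho> (c *\<^sub>R u) = c * \<rho> u" if "u \<in> span S" for c u using lin that unfolding lin_sp_def by blast
  define A where "A = (\<lambda>m. \<rho> m - r (m - s)) ` span S"
  have key: "\<rho> m' - r (m' - s) \<le> r (m + s) - \<rho> m" if "m \<in> span S" "m' \<in> span S" for m m'
  proof -
    have "\<rho> m' + \<rho> m = \<rho> (m' + m)" using ladd that by simp
    also have "\<dots> \<le> r (m' + m)" using le that by (simp add: span_add)
    also have "m' + m = (m' - s) + (m + s)" by simp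
    also have "r \<dots> \<le> r (m' - s) + r (m + s)"
      using radd sub that sT by (meson span_add span_diff subsetD)
    finally show ?thesis by simp
  qed
  define \<alpha> where "\<alpha> = Sup A"
  have Ane: "A \<noteq> {}" unfolding A_def using span_zero by blast
  have Abdd: "bdd_above A" unfolding A_def bdd_above_def using key span_zero by blast
  have al1: "\<rho> m - r (m - s) \<le> \<alpha>" if "m \<in> span S" for m
    unfolding \<alpha>_def using Abdd that by (auto intro!: cSup_upper simp: A_def)
  have al2: "\<alpha> \<le> r (m + s) - \<rho> m" if "m \<in> span S" for m
    unfolding \<alpha>_def using Ane that key by (auto intro!: cSup_least simp: A_def)
  have uniq: "k1 = k2" if "w - k1 *\<^sub>R s \<in> span S" "w - k2 *\<^sub>R s \<in> span S" for w k1 k2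
  proof (rule ccontr)
    assume ne: "k1 \<noteq> k2"
    have "(w - k2 *\<^sub>R s) - (w - k1 *\<^sub>R s) \<in> span S" using that span_diff by blast
    hence "(k1 - k2) *\<^sub>R s \<in> span S" by (simp add: algebra_simps)
    hence "inverse (k1 - k2) *\<^sub>R ((k1 - k2) *\<^sub>R s) \<in> span S" using span_mul by blast
    thus False using ne ns by simp
  qed
  have ex: "\<exists>k. w - k *\<^sub>R s \<in> span S" if "w \<in> ?T" for w using that span_insert[of s S] by auto
  define kk where "kk w = (THE k. w - k *\<^sub>R s \<in> span S)" for w
  have kk: "w - kk w *\<^sub>R s \<in> span S" if "w \<in> ?T" for w
    unfolding kk_def using ex[OF that] uniq by (metis (mono_tags, lifting) theI)
  have kk_eq: "kk w = k" if "w - k *\<^sub>R s \<in> span S" for w k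
  proof -
    have "w = (w - k *\<^sub>R s) + k *\<^sub>R s" by simp
    hence "w \<in> ?T" using that sub sT by (metis span_add span_scale subsetD)
    thus ?thesis using kk uniq that by blast
  qed
  define \<rho>' where "\<rho>' w = \<rho> (w - kk w *\<^sub>R s) + kk w * \<alpha>" for w
  have "lin_sp \<rho>' ?T"
    unfolding lin_sp_def
  proof (intro conjI ballI allI)
    fix u v assume u: "u \<in> ?T" and v: "v \<in> ?T"
    have e: "(u + v) - (kk u + kk v) *\<^sub>R s = (u - kk u *\<^sub>R s) + (v - kk v *\<^sub>R s)" by (simp add: algebra_simps)
    have "kk (u + v) = kk u + kk v" using kk_eq e kk[OF u] kk[OF v] span_add by metis
    moreover have "\<rho> ((u + v) - (kk u + kk v) *\<^sub>R s) = \<rho> (u - kk u *\<^sub>R s) + \<rho> (v - kk v *\<^sub>R s)"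
      unfolding e using ladd kk u v by blast
    ultimately show "\<rho>' (u + v) = \<rho>' u + \<rho>' v" unfolding \<rho>'_def by (simp add: algebra_simps)
  next
    fix c u assume u: "u \<in> ?T"
    have e: "c *\<^sub>R u - (c * kk u) *\<^sub>R s = c *\<^sub>R (u - kk u *\<^sub>R s)" by (simp add: algebra_simps)
    have "kk (c *\<^sub>R u) = c * kk u" using kk_eq e kk[OF u] span_scale by metis
    moreover have "\<rho> (c *\<^sub>R u - (c * kk u) *\<^sub>R s) = c * \<rho> (u - kk u *\<^sub>R s)"
      unfolding e using lhom kk u by blast
    ultimately show "\<rho>' (c *\<^sub>R u) = c * \<rho>' u" unfolding \<rho>'_def by (simp add: algebra_simps)
  qed
  moreover have "\<rho>' w \<le> r w" if w: "w \<in> ?T" for w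
  proof -
    define m where "m = w - kk w *\<^sub>R s"
    define k where "k = kk w"
    have m: "m \<in> span S" using kk w m_def by simp
    have wm: "w = m + k *\<^sub>R s" by (simp add: m_def k_def)
    have "\<rho>' w = \<rho> m + k * \<alpha>" by (simp add: \<rho>'_def m_def k_def)
    also have "\<dots> \<le> r w"
    proof (cases "k = 0")
      case True thus ?thesis using le m wm by simp
    next
      case False
      show ?thesis
      proof (cases "k > 0")
        case True
        have mk: "inverse k *\<^sub>R m \<in> span S" using m span_scale by blast
        have "\<alpha> \<le> r (inverse k *\<^sub>R m + s) - \<rho> (inverse k *\<^sub>R m)" using al2 mk by blast
        also have "inverse k *\<^sub>R m + s = inverse k *\<^sub>R w" using True by (simp add: wm algebra_simps)
        finally have "\<alpha> \<le> inverse k * r w - inverse k * \<rho> m"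
          using rhom[of "inverse k" w] True w lhom m by simp
        hence "k * \<alpha> \<le> k * (inverse k * r w - inverse k * \<rho> m)" using True by (simp add: mult_left_mono)
        moreover have "k * (inverse k * r w - inverse k * \<rho> m) = r w - \<rho> m" using True by (simp add: right_diff_distrib mult.assoc[symmetric])
        ultimately show ?thesis by (simp add: algebra_simps)
      next
        case False2: False
        hence kn: "k < 0" using False by simp
        define j where "j = - k"
        have j: "j > 0" using kn j_def by simp
        have mk: "inverse j *\<^sub>R m \<in> span S" using m span_scale by blast
        have "\<rho> (inverse j *\<^sub>R m) - r (inverse j *\<^sub>R m - s) \<le> \<alpha>" using al1 mk by blast
        also have "inverse j *\<^sub>R m - s = inverse j *\<^sub>R w" using j by (simp add: wm j_def algebra_simps)
        finally have "inverse j * \<rho> m - inverse j * r w \<le> \<alpha>"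
          using rhom[of "inverse j" w] j w lhom m by simp
        hence "j * (inverse j * \<rho> m - inverse j * r w) \<le> j * \<alpha>" using j by (simp add: mult_left_mono)
        moreover have "j * (inverse j * \<rho> m - inverse j * r w) = \<rho> m - r w" using j by (simp add: right_diff_distrib mult.assoc[symmetric])
        ultimately show ?thesis by (simp add: algebra_simps j_def)
      qed
    qed
    finally show ?thesis .
  qed
  ultimately show ?thesis by blast
qed

lemma hb_fin:
  fixes S :: "'v::real_vector set"
  assumes "finite S" "sublin r (span S)"
  shows "\<exists>\<rho>. lin_sp \<rho> (span S) \<and> (\<forall>w\<in>span S. \<rho> w \<le> r w)"
  using assms
proof (induction S rule: finite_induct)
  case empty
  have "r 0 = 0" using empty.prems unfolding sublin_def
    by (metis mult_zero_left order_refl scale_zero_left span_zero)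
  thus ?case by (rule_tac x="\<lambda>_. 0" in exI) (simp add: lin_sp_def)
next
  case (insert s S)
  have "sublin r (span S)" using insert.prems unfolding sublin_def
    by (meson span_mono subset_insertI subsetD)
  then obtain \<rho> where r: "lin_sp \<rho> (span S)" "\<forall>w\<in>span S. \<rho> w \<le> r w" using insert.IH by blast
  show ?case
  proof (cases "s \<in> span S")
    case True
    hence "span (insert s S) = span S" by (simp add: span_redundant)
    thus ?thesis using r by auto
  next
    case False thus ?thesis using hb_step[OF insert.prems r] by blast
  qed
qed

definition re :: "'k::{real_normed_field,euclidean_space} \<Rightarrow> real" where
  "re t = inner t 1"

lemma re_of_real[simp]: "re (of_real r :: 'k::{real_normed_field,euclidean_space}) = r"
  unfolding re_def of_real_def by (simp add: inner_scaleR_left dot_square_norm)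

lemma re_one[simp]: "re (1::'k::{real_normed_field,euclidean_space}) = 1"
  using re_of_real[of 1, where 'k='k] by simp

lemma re_le_norm: "re (t::'k::{real_normed_field,euclidean_space}) \<le> norm t"
  unfolding re_def using norm_cauchy_schwarz[of t 1] by simp

lemma re_add: "re ((a::'k::{real_normed_field,euclidean_space}) + b) = re a + re b"
  unfolding re_def by (simp add: inner_add_left)

lemma re_scaleR: "re (c *\<^sub>R (a::'k::{real_normed_field,euclidean_space})) = c * re a"
  unfolding re_def by (simp add: inner_scaleR_left)

lemma re_minus: "re (- (a::'k::{real_normed_field,euclidean_space})) = - re a"
  unfolding re_def by simp

lemma re_diff: "re ((a::'k::{real_normed_field,euclidean_space}) - b) = re a - re b"
  unfolding re_def by (simp add: inner_diff_left)

lemma kunit: "\<exists>c::'k::{real_normed_field,euclidean_space}. norm c = 1 \<and> c * w = of_real (norm w)"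
proof (cases "w = 0")
  case True thus ?thesis by (rule_tac x=1 in exI) simp
next
  case False
  show ?thesis
    by (rule exI[of _ "of_real (norm w) / w"]) (use False in \<open>simp add: norm_divide\<close>)
qed

lemma re_inj:
  fixes a b :: "'k::{real_normed_field,euclidean_space}"
  assumes "\<forall>t. re (t * a) = re (t * b)" shows "a = b"
proof (rule ccontr)
  assume ne: "a \<noteq> b"
  have "re (inverse (a - b) * a) - re (inverse (a - b) * b) = re (inverse (a - b) * (a - b))"
    by (simp add: re_diff right_diff_distrib)
  also have "\<dots> = 1" using ne by simp
  finally show False using assms by simp
qed

lemma complexify_pt:
  fixes \<psi> :: "'k::{real_normed_field,euclidean_space} \<Rightarrow> real"
  assumes lin: "linear \<psi>"
  shows "\<exists>w. \<forall>t. re (t * w) = \<psi> t"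
proof -
  define \<Phi> where "\<Phi> w = (\<Sum>\<beta>\<in>Basis. re (\<beta> * w) *\<^sub>R \<beta>)" for w :: 'k
  have linP: "linear \<Phi>"
    unfolding \<Phi>_def
    by (rule linearI) (simp_all add: distrib_left re_add scaleR_add_left sum.distrib re_scaleR scaleR_sum_right)
  have coord: "\<Phi> w \<bullet> \<beta> = re (\<beta> * w)" if "\<beta> \<in> Basis" for w \<beta>
    unfolding \<Phi>_def using that by (simp add: inner_sum_left inner_Basis if_distrib cong: if_cong)
  have expand: "re (t * w) = (\<Sum>\<beta>\<in>Basis. (t \<bullet> \<beta>) * re (\<beta> * w))" for t w :: 'k
  proof -
    have "re (t * w) = re ((\<Sum>\<beta>\<in>Basis. (t \<bullet> \<beta>) *\<^sub>R \<beta>) * w)" by (simp add: euclidean_representation)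
    also have "\<dots> = (\<Sum>\<beta>\<in>Basis. (t \<bullet> \<beta>) * re (\<beta> * w))"
      by (simp add: sum_distrib_right re_def inner_sum_left inner_scaleR_left)
    finally show ?thesis .
  qed
  have "inj \<Phi>"
  proof (rule linear_injective_0[OF linP, THEN iffD2], intro allI impI)
    fix w assume "\<Phi> w = 0"
    hence "re (\<beta> * w) = 0" if "\<beta> \<in> Basis" for \<beta> using coord[OF that, of w] by simp
    hence z: "re (t * w) = 0" for t using expand[of t w] by simp
    show "w = 0"
    proof (rule ccontr)
      assume "w \<noteq> 0"
      hence "re (inverse w * w) = 1" by simp
      thus False using z by simp
    qed
  qed
  hence "surj \<Phi>" using linear_injective_imp_surjective linP by blast
  then obtain w where w: "\<Phi> w = (\<Sum>\<beta>\<in>Basis. \<psi> \<beta> *\<^sub>R \<beta>)" by (metis surjD)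
  have "re (\<beta> * w) = \<psi> \<beta>" if "\<beta> \<in> Basis" for \<beta>
    using coord[OF that, of w] that unfolding w by (simp add: inner_sum_left inner_Basis if_distrib cong: if_cong)
  hence "re (t * w) = \<psi> t" for t
  proof -
    assume h: "\<And>\<beta>. \<beta> \<in> Basis \<Longrightarrow> re (\<beta> * w) = \<psi> \<beta>"
    have "re (t * w) = (\<Sum>\<beta>\<in>Basis. (t \<bullet> \<beta>) * \<psi> \<beta>)" using expand[of t w] h by simp
    also have "\<dots> = \<psi> (\<Sum>\<beta>\<in>Basis. (t \<bullet> \<beta>) *\<^sub>R \<beta>)"
      by (simp add: linear_sum[OF lin] linear_scale[OF lin])
    also have "\<dots> = \<psi> t" by (simp add: euclidean_representation)
    finally show ?thesis .
  qed
  thus ?thesis by blast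
qed

instantiation "fun" :: (type, real_vector) real_vector
begin
definition scaleR_fun :: "real \<Rightarrow> ('a \<Rightarrow> 'b) \<Rightarrow> 'a \<Rightarrow> 'b" where
  "scaleR_fun r f = (\<lambda>x. r *\<^sub>R f x)"
instance by standard (simp_all add: scaleR_fun_def fun_eq_iff scaleR_add_right scaleR_add_left)
end

lemma scaleR_fun_apply[simp]: "(r *\<^sub>R f) x = r *\<^sub>R f x" by (simp add: scaleR_fun_def)

definition nrm :: "'x set \<Rightarrow> ('x \<Rightarrow> 'k::real_normed_vector) \<Rightarrow> real" where
  "nrm X v = Max (insert 0 ((\<lambda>x. norm (v x)) ` X))"

lemma nrm_ge: "finite X \<Longrightarrow> x \<in> X \<Longrightarrow> norm (v x) \<le> nrm X v"
  unfolding nrm_def by (simp add: Max_ge_iff)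

lemma nrm_nonneg: "finite X \<Longrightarrow> 0 \<le> nrm X v"
  unfolding nrm_def by (simp add: Max_ge_iff)

lemma nrm_le: "finite X \<Longrightarrow> 0 \<le> M \<Longrightarrow> (\<forall>x\<in>X. norm (v x) \<le> M) \<Longrightarrow> nrm X v \<le> M"
  unfolding nrm_def by (simp add: Max_le_iff)

lemma nrm_triangle: assumes f: "finite X" shows "nrm X (u + v) \<le> nrm X u + nrm X v"
proof (rule nrm_le[OF f])
  show "0 \<le> nrm X u + nrm X v" by (intro add_nonneg_nonneg nrm_nonneg[OF f])
  show "\<forall>x\<in>X. norm ((u + v) x) \<le> nrm X u + nrm X v"
  proof
    fix x assume x: "x \<in> X"
    have "norm ((u + v) x) = norm (u x + v x)" by simp
    also have "\<dots> \<le> norm (u x) + norm (v x)" by (rule norm_triangle_ineq)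
    also have "\<dots> \<le> nrm X u + nrm X v" by (rule add_mono[OF nrm_ge[OF f x] nrm_ge[OF f x]])
    finally show "norm ((u + v) x) \<le> nrm X u + nrm X v" .
  qed
qed

lemma nrm_mult_le: "finite X \<Longrightarrow> nrm X (\<lambda>x. c * v x) \<le> norm (c::'k::real_normed_field) * nrm X v"
proof -
  assume f: "finite X"
  have *: "norm (c * v x) \<le> norm c * nrm X v" if "x \<in> X" for x
    unfolding norm_mult by (rule mult_left_mono[OF nrm_ge[OF f that]]) simp
  show ?thesis
    apply (rule nrm_le[OF f])
     apply (rule mult_nonneg_nonneg[OF norm_ge_zero nrm_nonneg[OF f]])
    using * by blast
qed

lemma nrm_mult: "finite X \<Longrightarrow> nrm X (\<lambda>x. c * v x) = norm (c::'k::real_normed_field) * nrm X v"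
proof -
  assume f: "finite X"
  show ?thesis
  proof (cases "c = 0")
    case True
    have "nrm X (\<lambda>x. c * v x) \<le> 0" by (rule nrm_le[OF f]) (simp_all add: True)
    moreover have "0 \<le> nrm X (\<lambda>x. c * v x)" by (rule nrm_nonneg[OF f])
    ultimately have "nrm X (\<lambda>x. c * v x) = 0" by (rule antisym)
    thus ?thesis by (simp only: True norm_zero mult_zero_left)
  next
    case False
    have eq: "(\<lambda>x. inverse c * (c * v x)) = v" using False by (simp add: fun_eq_iff)
    have "nrm X v = nrm X (\<lambda>x. inverse c * (c * v x))" by (simp only: eq)
    also have "\<dots> \<le> norm (inverse c) * nrm X (\<lambda>x. c * v x)" by (rule nrm_mult_le[OF f])
    finally have h: "nrm X v \<le> norm (inverse c) * nrm X (\<lambda>x. c * v x)" .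
    have "norm c * nrm X v \<le> norm c * (norm (inverse c) * nrm X (\<lambda>x. c * v x))"
      by (rule mult_left_mono[OF h]) simp
    also have "\<dots> = (norm c * norm (inverse c)) * nrm X (\<lambda>x. c * v x)" by (rule mult.assoc[symmetric])
    also have "norm c * norm (inverse c) = 1" using False by (simp add: norm_inverse)
    also have "1 * nrm X (\<lambda>x. c * v x) = nrm X (\<lambda>x. c * v x)" by (rule mult_1)
    finally have "norm c * nrm X v \<le> nrm X (\<lambda>x. c * v x)" .
    thus ?thesis by (rule antisym[OF nrm_mult_le[OF f]])
  qed
qed

lemma nrm_scaleR: "finite X \<Longrightarrow> nrm X (c *\<^sub>R v) = \<bar>c\<bar> * nrm X (v::'x \<Rightarrow> 'k::real_normed_field)"
proof -
  assume f: "finite X"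
  have "c *\<^sub>R v x = of_real c * v x" for x
    by (rule scaleR_conv_of_real)
  hence "c *\<^sub>R v = (\<lambda>x. of_real c * v x)" unfolding scaleR_fun_def by blast
  thus ?thesis using nrm_mult[OF f, of "of_real c" v] by simp
qed

lemma nrm_minus: "finite X \<Longrightarrow> nrm X (- v) = nrm X (v::'x \<Rightarrow> 'k::real_normed_vector)"
  unfolding nrm_def by simp

lemma sum_fun_apply: "sum f A x = sum (\<lambda>a. f a x) A"
  by (induction A rule: infinite_finite_induct) auto

lemma re_zero[simp]: "re (0::'k::{real_normed_field,euclidean_space}) = 0"
  by (simp add: re_def)

lemma nrm_cong: "finite X \<Longrightarrow> (\<forall>x\<in>X. u x = v x) \<Longrightarrow> nrm X u = nrm X v"
  unfolding nrm_def by (metis (no_types, lifting) image_cong)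

lemma nrm_zero: assumes f: "finite X" shows "nrm X (0::'x \<Rightarrow> 'k::real_normed_vector) = 0"
proof -
  have "nrm X (0::'x \<Rightarrow> 'k) \<le> 0" using nrm_le[OF f, of 0 "0::'x \<Rightarrow> 'k"] by simp
  thus ?thesis using nrm_nonneg[OF f, of "0::'x \<Rightarrow> 'k"] by linarith
qed

lemma fin_approx:
  fixes sm :: "'k::{real_normed_field,euclidean_space} \<Rightarrow> 'b::ab_group_add \<Rightarrow> 'b"
    and V :: "'b set" and y :: "'b \<Rightarrow> 'k" and L :: "'x \<Rightarrow> 'b \<Rightarrow> 'k" and N :: "'b \<Rightarrow> real"
    and X :: "'x set" and R \<epsilon> :: real
  assumes V: "lin_subspace sm V" and sm0: "sm 0 0 = 0"
    and ylin: "lin_on sm (*) V y" and Llin: "\<forall>x. lin_on sm (*) V (L x)"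
    and Nsn: "is_seminorm_on sm V N"
    and fin: "finite X" and R: "R \<ge> 0" and eps: "\<epsilon> \<ge> 0"
    and bnd: "\<forall>b\<in>V. norm (y b) \<le> R * nrm X (\<lambda>x. L x b) + \<epsilon> * N b"
  shows "\<exists>a. (\<Sum>x\<in>X. norm (a x)) \<le> R \<and> (\<forall>b\<in>V. norm (y b - (\<Sum>x\<in>X. a x * L x b)) \<le> \<epsilon> * N b)"
proof -
  have V0: "0 \<in> V" and Vadd: "\<And>b1 b2. b1 \<in> V \<Longrightarrow> b2 \<in> V \<Longrightarrow> b1 + b2 \<in> V"
    and Vsm: "\<And>c b. b \<in> V \<Longrightarrow> sm c b \<in> V" using V unfolding lin_subspace_def by blast+
  have yadd: "\<And>b1 b2. b1 \<in> V \<Longrightarrow> b2 \<in> V \<Longrightarrow> y (b1 + b2) = y b1 + y b2"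
    and ysm: "\<And>c b. b \<in> V \<Longrightarrow> y (sm c b) = c * y b" using ylin unfolding lin_on_def by blast+
  have Ladd: "\<And>x b1 b2. b1 \<in> V \<Longrightarrow> b2 \<in> V \<Longrightarrow> L x (b1 + b2) = L x b1 + L x b2"
    and Lsm: "\<And>x c b. b \<in> V \<Longrightarrow> L x (sm c b) = c * L x b" using Llin unfolding lin_on_def by blast+
  have Nadd: "\<And>b1 b2. b1 \<in> V \<Longrightarrow> b2 \<in> V \<Longrightarrow> N (b1 + b2) \<le> N b1 + N b2"
    and Nsm: "\<And>c b. b \<in> V \<Longrightarrow> N (sm c b) = norm c * N b" using Nsn unfolding is_seminorm_on_def by blast+
  have y0: "y 0 = 0" using ysm[OF V0, of 0] sm0 by simp
  have L0: "L x 0 = 0" for x using Lsm[OF V0, of x 0] sm0 by simp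
  have N0: "N 0 = 0" using Nsm[OF V0, of 0] sm0 by simp
  have nz: "nrm X (0::'x \<Rightarrow> 'k) = 0" by (rule nrm_zero[OF fin])
  define \<Psi> where "\<Psi> b = (\<lambda>x. if x \<in> X then L x b else 0)" for b
  have Psi_add: "\<Psi> (b1 + b2) = \<Psi> b1 + \<Psi> b2" if "b1 \<in> V" "b2 \<in> V" for b1 b2
    unfolding \<Psi>_def using Ladd[OF that] by (simp add: fun_eq_iff)
  have Psi_sm: "\<Psi> (sm c b) = (\<lambda>x. c * \<Psi> b x)" if "b \<in> V" for c b
    unfolding \<Psi>_def using Lsm[OF that] by (simp add: fun_eq_iff)
  have Psi0: "\<Psi> 0 = 0" unfolding \<Psi>_def using L0 by (simp add: fun_eq_iff)
  have nrmPsi: "nrm X (\<Psi> b) = nrm X (\<lambda>x. L x b)" for b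
    by (rule nrm_cong[OF fin]) (simp add: \<Psi>_def)
  have real_sm: "(\<lambda>x. of_real c * w x) = c *\<^sub>R w" for c and w :: "'x \<Rightarrow> 'k"
    by (simp add: fun_eq_iff scaleR_conv_of_real)
  define trm where "trm v b = R * nrm X (v - \<Psi> b) + \<epsilon> * N b + re (y b)" for v b
  define r where "r v = Inf (trm v ` V)" for v
  have trm_low: "- R * nrm X v \<le> trm v b" if b: "b \<in> V" for v b
  proof -
    have "nrm X (\<Psi> b) \<le> nrm X (\<Psi> b - v) + nrm X v"
      using nrm_triangle[OF fin, of "\<Psi> b - v" v] by simp
    also have "nrm X (\<Psi> b - v) = nrm X (v - \<Psi> b)"
      using nrm_minus[OF fin, of "v - \<Psi> b"] by simp
    finally have h: "nrm X (\<Psi> b) \<le> nrm X (v - \<Psi> b) + nrm X v" .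
    have "- re (y b) \<le> norm (y b)" using re_le_norm[of "- y b"] by (simp add: re_minus)
    also have "\<dots> \<le> R * nrm X (\<Psi> b) + \<epsilon> * N b" using bnd b nrmPsi by simp
    finally have h2: "- re (y b) \<le> R * nrm X (\<Psi> b) + \<epsilon> * N b" .
    have "R * nrm X (\<Psi> b) \<le> R * (nrm X (v - \<Psi> b) + nrm X v)" by (rule mult_left_mono[OF h R])
    thus ?thesis using h2 unfolding trm_def by (simp add: algebra_simps)
  qed
  have bddb: "bdd_below (trm v ` V)" for v
    unfolding bdd_below_def using trm_low by blast
  have r_le: "r v \<le> trm v b" if "b \<in> V" for v b
    unfolding r_def using bddb that by (simp add: cInf_lower)
  have r_ge: "m \<le> r v" if "\<And>b. b \<in> V \<Longrightarrow> m \<le> trm v b" for v m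
    unfolding r_def using V0 that by (intro cInf_greatest) auto
  have trm_add: "trm (u + v) (b1 + b2) \<le> trm u b1 + trm v b2" if b: "b1 \<in> V" "b2 \<in> V" for u v b1 b2
  proof -
    have eq: "u + v - \<Psi> (b1 + b2) = (u - \<Psi> b1) + (v - \<Psi> b2)" using Psi_add[OF b] by (simp add: algebra_simps)
    have "nrm X (u + v - \<Psi> (b1 + b2)) \<le> nrm X (u - \<Psi> b1) + nrm X (v - \<Psi> b2)"
      unfolding eq by (rule nrm_triangle[OF fin])
    hence "R * nrm X (u + v - \<Psi> (b1 + b2)) \<le> R * (nrm X (u - \<Psi> b1) + nrm X (v - \<Psi> b2))"
      by (rule mult_left_mono[OF _ R])
    hence a: "R * nrm X (u + v - \<Psi> (b1 + b2)) \<le> R * nrm X (u - \<Psi> b1) + R * nrm X (v - \<Psi> b2)"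
      by (simp add: distrib_left)
    have c: "\<epsilon> * N (b1 + b2) \<le> \<epsilon> * N b1 + \<epsilon> * N b2"
      using mult_left_mono[OF Nadd[OF b] eps] by (simp add: distrib_left)
    have d: "re (y (b1 + b2)) = re (y b1) + re (y b2)" using yadd[OF b] by (simp add: re_add)
    show ?thesis unfolding trm_def using a c d by simp
  qed
  have r_add: "r (u + v) \<le> r u + r v" for u v
  proof -
    have "r (u + v) - trm v b2 \<le> r u" if b2: "b2 \<in> V" for b2
    proof (rule r_ge)
      fix b1 assume b1: "b1 \<in> V"
      have "r (u + v) \<le> trm (u + v) (b1 + b2)" by (rule r_le[OF Vadd[OF b1 b2]])
      also have "\<dots> \<le> trm u b1 + trm v b2" by (rule trm_add[OF b1 b2])
      finally show "r (u + v) - trm v b2 \<le> trm u b1" by simp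
    qed
    hence "r (u + v) - r u \<le> r v" by (intro r_ge) (simp add: algebra_simps)
    thus ?thesis by simp
  qed
  have trm_scale: "trm (c *\<^sub>R v) (sm (of_real c) b) = c * trm v b" if c: "c > 0" and b: "b \<in> V" for c v b
  proof -
    have "c *\<^sub>R v - \<Psi> (sm (of_real c) b) = c *\<^sub>R (v - \<Psi> b)"
      using Psi_sm[OF b, of "of_real c"] real_sm[of c "\<Psi> b"] by (simp add: algebra_simps)
    hence a: "nrm X (c *\<^sub>R v - \<Psi> (sm (of_real c) b)) = c * nrm X (v - \<Psi> b)"
      using nrm_scaleR[OF fin, of c "v - \<Psi> b"] c by simp
    have n: "N (sm (of_real c) b) = c * N b" using Nsm[OF b, of "of_real c"] c by simp
    have yy: "re (y (sm (of_real c) b)) = c * re (y b)"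
      using ysm[OF b, of "of_real c"] by (simp add: scaleR_conv_of_real[symmetric] re_scaleR)
    show ?thesis unfolding trm_def a n yy by (simp add: algebra_simps)
  qed
  have r_hom: "r (c *\<^sub>R v) = c * r v" if c: "c \<ge> 0" for c v
  proof (cases "c = 0")
    case True
    have "r 0 \<le> trm 0 0" by (rule r_le[OF V0])
    also have "trm 0 0 = 0" unfolding trm_def using Psi0 N0 y0 nz by simp
    finally have "r 0 \<le> 0" .
    moreover have "0 \<le> r 0"
    proof (rule r_ge)
      fix b assume b: "b \<in> V"
      show "0 \<le> trm 0 b" using trm_low[OF b, of 0] nz by simp
    qed
    ultimately show ?thesis using True by simp
  next
    case False
    hence cp: "c > 0" using c by simp
    have "r (c *\<^sub>R v) / c \<le> r v"
    proof (rule r_ge)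
      fix b assume b: "b \<in> V"
      have "r (c *\<^sub>R v) \<le> trm (c *\<^sub>R v) (sm (of_real c) b)" by (rule r_le[OF Vsm[OF b]])
      also have "\<dots> = c * trm v b" by (rule trm_scale[OF cp b])
      finally show "r (c *\<^sub>R v) / c \<le> trm v b" using cp by (simp add: field_simps)
    qed
    hence le1: "r (c *\<^sub>R v) \<le> c * r v" using cp by (simp add: field_simps)
    have "r v \<le> r (c *\<^sub>R v) / c"
    proof -
      have "r v \<le> trm (c *\<^sub>R v) b / c" if b: "b \<in> V" for b
      proof -
        have ic: "inverse c > 0" using cp by simp
        have h1: "r v \<le> trm v (sm (of_real (inverse c)) b)" by (rule r_le[OF Vsm[OF b]])
        have eqv: "inverse c *\<^sub>R (c *\<^sub>R v) = v" using cp by simp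
        have "trm (inverse c *\<^sub>R (c *\<^sub>R v)) (sm (of_real (inverse c)) b) = inverse c * trm (c *\<^sub>R v) b"
          by (rule trm_scale[OF ic b])
        hence "trm v (sm (of_real (inverse c)) b) = inverse c * trm (c *\<^sub>R v) b" by (simp only: eqv)
        thus ?thesis using h1 by (simp add: divide_inverse mult.commute)
      qed
      hence "c * r v \<le> r (c *\<^sub>R v)" using cp by (intro r_ge) (simp add: field_simps)
      thus ?thesis using cp by (simp add: field_simps)
    qed
    hence "c * r v \<le> r (c *\<^sub>R v)" using cp by (simp add: field_simps)
    thus ?thesis using le1 by simp
  qed
  define W where "W = {v :: 'x \<Rightarrow> 'k. \<forall>x. x \<notin> X \<longrightarrow> v x = 0}"
  define e where "e x \<beta> = (\<lambda>x'. if x' = x then \<beta> else (0::'k))" for x :: 'x and \<beta>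
  define S where "S = (\<lambda>(x, \<beta>). e x \<beta>) ` (X \<times> (Basis :: 'k set))"
  have finS: "finite S" unfolding S_def using fin by simp
  have subW: "subspace W" unfolding subspace_def W_def by simp
  have "S \<subseteq> W" unfolding S_def W_def e_def by auto
  hence spanW: "span S \<subseteq> W" using span_minimal subW by blast
  have Wspan: "W \<subseteq> span S"
  proof
    fix v assume v: "v \<in> W"
    have eq: "v = (\<Sum>x\<in>X. \<Sum>\<beta>\<in>Basis. (v x \<bullet> \<beta>) *\<^sub>R e x \<beta>)"
    proof
      fix x0
      have "(\<Sum>x\<in>X. \<Sum>\<beta>\<in>Basis. (v x \<bullet> \<beta>) *\<^sub>R e x \<beta>) x0 = (\<Sum>x\<in>X. \<Sum>\<beta>\<in>Basis. (v x \<bullet> \<beta>) *\<^sub>R e x \<beta> x0)"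
        by (simp add: sum_fun_apply)
      also have "\<dots> = (\<Sum>x\<in>X. if x = x0 then (\<Sum>\<beta>\<in>Basis. (v x \<bullet> \<beta>) *\<^sub>R \<beta>) else 0)"
        by (intro sum.cong refl) (auto simp: e_def)
      also have "\<dots> = (if x0 \<in> X then (\<Sum>\<beta>\<in>Basis. (v x0 \<bullet> \<beta>) *\<^sub>R \<beta>) else 0)"
        using fin by (simp add: sum.delta')
      also have "\<dots> = v x0" using v unfolding W_def by (simp add: euclidean_representation)
      finally show "v x0 = (\<Sum>x\<in>X. \<Sum>\<beta>\<in>Basis. (v x \<bullet> \<beta>) *\<^sub>R e x \<beta>) x0" by simp
    qed
    have "(\<Sum>x\<in>X. \<Sum>\<beta>\<in>Basis. (v x \<bullet> \<beta>) *\<^sub>R e x \<beta>) \<in> span S"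
      by (intro span_sum span_scale span_base) (auto simp: S_def)
    thus "v \<in> span S" using eq by simp
  qed
  have spanS: "span S = W" using spanW Wspan by blast
  have sl: "sublin r (span S)" unfolding sublin_def using r_add r_hom by blast
  obtain \<rho> where \<rho>lin: "lin_sp \<rho> (span S)" and \<rho>le: "\<forall>w\<in>span S. \<rho> w \<le> r w"
    using hb_fin[OF finS sl] by blast
  have \<rho>add: "\<rho> (u + v) = \<rho> u + \<rho> v" if "u \<in> W" "v \<in> W" for u v
    using \<rho>lin that unfolding lin_sp_def spanS by blast
  have \<rho>sc: "\<rho> (c *\<^sub>R u) = c * \<rho> u" if "u \<in> W" for c u
    using \<rho>lin that unfolding lin_sp_def spanS by blast
  have \<rho>r: "\<rho> w \<le> r w" if "w \<in> W" for w using \<rho>le that spanS by blast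
  have Wmul: "(\<lambda>x. t * v x) \<in> W" if "v \<in> W" for t v using that unfolding W_def by simp
  have PsiW: "\<Psi> b \<in> W" for b unfolding W_def \<Psi>_def by simp
  have exz: "\<exists>w. \<forall>t. re (t * w) = \<rho> (\<lambda>x. t * v x)" if v: "v \<in> W" for v
  proof (rule complexify_pt, rule linearI)
    fix t1 t2 :: 'k
    have "(\<lambda>x. (t1 + t2) * v x) = (\<lambda>x. t1 * v x) + (\<lambda>x. t2 * v x)" by (simp add: fun_eq_iff distrib_right)
    thus "\<rho> (\<lambda>x. (t1 + t2) * v x) = \<rho> (\<lambda>x. t1 * v x) + \<rho> (\<lambda>x. t2 * v x)"
      using \<rho>add[OF Wmul[OF v] Wmul[OF v]] by simp
  next
    fix c :: real and t :: 'k
    have "(\<lambda>x. (c *\<^sub>R t) * v x) = c *\<^sub>R (\<lambda>x. t * v x)" by (simp add: fun_eq_iff)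
    thus "\<rho> (\<lambda>x. (c *\<^sub>R t) * v x) = c *\<^sub>R \<rho> (\<lambda>x. t * v x)"
      using \<rho>sc[OF Wmul[OF v]] by simp
  qed
  define z where "z v = (SOME w. \<forall>t. re (t * w) = \<rho> (\<lambda>x. t * v x))" for v
  have zprop: "re (t * z v) = \<rho> (\<lambda>x. t * v x)" if "v \<in> W" for t v
    unfolding z_def using someI_ex[OF exz[OF that]] by blast
  have z_add: "z (u + v) = z u + z v" if u: "u \<in> W" and v: "v \<in> W" for u v
  proof (rule re_inj[symmetric], rule allI)
    fix t
    have uv: "u + v \<in> W" using u v subW by (simp add: subspace_add)
    have "(\<lambda>x. t * (u + v) x) = (\<lambda>x. t * u x) + (\<lambda>x. t * v x)" by (simp add: fun_eq_iff distrib_left)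
    hence "\<rho> (\<lambda>x. t * (u + v) x) = \<rho> (\<lambda>x. t * u x) + \<rho> (\<lambda>x. t * v x)"
      using \<rho>add[OF Wmul[OF u] Wmul[OF v]] by simp
    thus "re (t * (z u + z v)) = re (t * z (u + v))"
      using zprop[OF u] zprop[OF v] zprop[OF uv] by (simp add: distrib_left re_add)
  qed
  have z_mul: "z (\<lambda>x. s * v x) = s * z v" if v: "v \<in> W" for s v
  proof (rule re_inj[symmetric], rule allI)
    fix t
    have "re (t * (s * z v)) = re ((t * s) * z v)" by (simp add: mult.assoc)
    also have "\<dots> = \<rho> (\<lambda>x. (t * s) * v x)" by (rule zprop[OF v])
    also have "\<dots> = re (t * z (\<lambda>x. s * v x))" using zprop[OF Wmul[OF v], of t s] by (simp add: mult.assoc)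
    finally show "re (t * (s * z v)) = re (t * z (\<lambda>x. s * v x))" .
  qed
  have z_bound: "norm (z v) \<le> R * nrm X v" if v: "v \<in> W" for v
  proof -
    obtain c where c: "norm c = 1" "c * z v = of_real (norm (z v))" using kunit by blast
    have "norm (z v) = re (c * z v)" using c by simp
    also have "\<dots> = \<rho> (\<lambda>x. c * v x)" by (rule zprop[OF v])
    also have "\<dots> \<le> r (\<lambda>x. c * v x)" by (rule \<rho>r[OF Wmul[OF v]])
    also have "\<dots> \<le> trm (\<lambda>x. c * v x) 0" by (rule r_le[OF V0])
    also have "\<dots> = R * nrm X v" unfolding trm_def using Psi0 N0 y0 nrm_mult[OF fin, of c v] c by simp
    finally show ?thesis .
  qed
  have rho_low: "re (y b) - \<epsilon> * N b \<le> \<rho> (\<Psi> b)" if b: "b \<in> V" for b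
  proof -
    have bm: "sm (-1) b \<in> V" by (rule Vsm[OF b])
    have P: "\<Psi> (sm (-1) b) = (-1) *\<^sub>R \<Psi> b" using Psi_sm[OF b, of "-1"] by (simp add: fun_eq_iff)
    have "\<rho> (\<Psi> (sm (-1) b)) \<le> r (\<Psi> (sm (-1) b))" by (rule \<rho>r[OF PsiW])
    also have "\<dots> \<le> trm (\<Psi> (sm (-1) b)) (sm (-1) b)" by (rule r_le[OF bm])
    also have "\<dots> = \<epsilon> * N b - re (y b)" unfolding trm_def
      using nz Nsm[OF b, of "-1"] ysm[OF b, of "-1"] by (simp add: re_minus)
    finally have "\<rho> (\<Psi> (sm (-1) b)) \<le> \<epsilon> * N b - re (y b)" .
    moreover have "\<rho> (\<Psi> (sm (-1) b)) = - \<rho> (\<Psi> b)" unfolding P using \<rho>sc[OF PsiW, of "-1" b] by (simp del: scaleR_minus_left)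
    ultimately show ?thesis by simp
  qed
  have z_approx: "norm (y b - z (\<Psi> b)) \<le> \<epsilon> * N b" if b: "b \<in> V" for b
  proof -
    obtain c where c: "norm c = 1" "c * (y b - z (\<Psi> b)) = of_real (norm (y b - z (\<Psi> b)))" using kunit by blast
    have cb: "sm c b \<in> V" by (rule Vsm[OF b])
    have "norm (y b - z (\<Psi> b)) = re (c * (y b - z (\<Psi> b)))" using c by simp
    also have "\<dots> = re (y (sm c b)) - re (c * z (\<Psi> b))" using ysm[OF b] by (simp add: right_diff_distrib re_diff)
    also have "re (c * z (\<Psi> b)) = \<rho> (\<Psi> (sm c b))" using zprop[OF PsiW, of c b] Psi_sm[OF b, of c] by simp
    also have "re (y (sm c b)) - \<rho> (\<Psi> (sm c b)) \<le> \<epsilon> * N (sm c b)" using rho_low[OF cb] by simp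
    also have "N (sm c b) = N b" using Nsm[OF b, of c] c by simp
    finally show ?thesis .
  qed
  define a where "a x = z (e x 1)" for x
  have eW: "e x t \<in> W" if "x \<in> X" for x t using that unfolding W_def e_def by simp
  have z0: "z 0 = 0"
  proof -
    have "z (\<lambda>x. 0 * (0::'x \<Rightarrow> 'k) x) = 0 * z 0" by (rule z_mul) (simp add: W_def)
    moreover have "(\<lambda>x. 0 * (0::'x \<Rightarrow> 'k) x) = 0" by (simp add: fun_eq_iff)
    ultimately show ?thesis by simp
  qed
  have z_sum: "z (\<Sum>x\<in>F. e x (v x)) = (\<Sum>x\<in>F. v x * a x)" if "F \<subseteq> X" for F v
  proof -
    have "finite F" using that fin finite_subset by blast
    thus ?thesis using that
    proof (induction F rule: finite_induct)
      case empty thus ?case using z0 by (simp add: zero_fun_def)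
    next
      case (insert x F)
      have xX: "x \<in> X" using insert.prems by simp
      have sW: "(\<Sum>x\<in>F. e x (v x)) \<in> W" using insert.prems eW
        by (intro subspace_sum[OF subW]) auto
      have "e x (v x) = (\<lambda>x'. v x * e x 1 x')" by (simp add: e_def fun_eq_iff)
      hence ex: "z (e x (v x)) = v x * a x" using z_mul[OF eW[OF xX]] a_def by simp
      have "z (\<Sum>x\<in>insert x F. e x (v x)) = z (e x (v x) + (\<Sum>x\<in>F. e x (v x)))"
        by (simp only: sum.insert[OF insert.hyps])
      also have "\<dots> = z (e x (v x)) + z (\<Sum>x\<in>F. e x (v x))" by (rule z_add[OF eW[OF xX] sW])
      also have "\<dots> = v x * a x + (\<Sum>x\<in>F. v x * a x)" using ex insert by simp
      also have "\<dots> = (\<Sum>x\<in>insert x F. v x * a x)" by (simp only: sum.insert[OF insert.hyps])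
      finally show ?case .
    qed
  qed
  have z_rep: "z v = (\<Sum>x\<in>X. v x * a x)" if v: "v \<in> W" for v
  proof -
    have "v = (\<Sum>x\<in>X. e x (v x))"
    proof
      fix x0
      show "v x0 = (\<Sum>x\<in>X. e x (v x)) x0"
        using v fin unfolding W_def by (auto simp: sum_fun_apply e_def sum.delta' if_distrib cong: if_cong)
    qed
    thus ?thesis using z_sum[of X v] by simp
  qed
  have sum_a: "(\<Sum>x\<in>X. norm (a x)) \<le> R"
  proof -
    have "\<forall>x. \<exists>c. norm c = 1 \<and> c * a x = of_real (norm (a x))" using kunit by blast
    then obtain cu where cu: "\<And>x. norm (cu x) = 1" "\<And>x. cu x * a x = of_real (norm (a x))" by metis
    define v0 where "v0 = (\<lambda>x. if x \<in> X then cu x else 0)"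
    have v0W: "v0 \<in> W" unfolding v0_def W_def by simp
    have "z v0 = (\<Sum>x\<in>X. cu x * a x)" using z_rep[OF v0W] by (simp add: v0_def)
    also have "\<dots> = (\<Sum>x\<in>X. of_real (norm (a x)))" using cu by simp
    also have "\<dots> = of_real (\<Sum>x\<in>X. norm (a x))" by (rule of_real_sum[symmetric])
    finally have "norm (z v0) = norm (of_real (\<Sum>x\<in>X. norm (a x)) :: 'k)" by simp
    also have "\<dots> = \<bar>\<Sum>x\<in>X. norm (a x)\<bar>" by (rule norm_of_real)
    also have "\<dots> = (\<Sum>x\<in>X. norm (a x))" by (rule abs_of_nonneg) (simp add: sum_nonneg)
    finally have "(\<Sum>x\<in>X. norm (a x)) = norm (z v0)" by simp
    also have "\<dots> \<le> R * nrm X v0" by (rule z_bound[OF v0W])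
    also have "\<dots> \<le> R * 1"
      by (rule mult_left_mono[OF nrm_le[OF fin] R]) (auto simp: v0_def cu)
    finally show ?thesis by simp
  qed
  show ?thesis
  proof (intro exI conjI ballI)
    show "(\<Sum>x\<in>X. norm (a x)) \<le> R" by (rule sum_a)
  next
    fix b assume b: "b \<in> V"
    have "z (\<Psi> b) = (\<Sum>x\<in>X. a x * L x b)" using z_rep[OF PsiW] by (simp add: \<Psi>_def mult.commute)
    thus "norm (y b - (\<Sum>x\<in>X. a x * L x b)) \<le> \<epsilon> * N b" using z_approx[OF b] by simp
  qed
qed

lemma fscale_apply: "fscale (*) c f = (\<lambda>w. c * f w)" by (simp add: fscale_def)

lemma fscale_m1: "fscale (*) (-1) f = - (f :: 'w \<Rightarrow> 'k::real_normed_field)"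
  by (simp add: fscale_def fun_eq_iff)

lemma fscale_0: "fscale (*) 0 f = (0 :: 'w \<Rightarrow> 'k::real_normed_field)"
  by (simp add: fscale_def fun_eq_iff)

lemma ls_0: "lin_subspace sc V \<Longrightarrow> 0 \<in> V" by (simp add: lin_subspace_def)
lemma ls_add: "lin_subspace sc V \<Longrightarrow> f \<in> V \<Longrightarrow> g \<in> V \<Longrightarrow> f + g \<in> V" by (simp add: lin_subspace_def)
lemma ls_sc: "lin_subspace sc V \<Longrightarrow> f \<in> V \<Longrightarrow> sc c f \<in> V" by (simp add: lin_subspace_def)

lemma ls_diff:
  assumes "lin_subspace (fscale (*)) V" "f \<in> V" "g \<in> V"
  shows "f - (g :: 'w \<Rightarrow> 'k::real_normed_field) \<in> V"
proof -
  have e: "f - g = f + fscale (*) (-1) g" by (simp add: fscale_m1)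
  have "fscale (*) (-1) g \<in> V" by (rule ls_sc[OF assms(1,3)])
  hence "f + fscale (*) (-1) g \<in> V" by (rule ls_add[OF assms(1,2)])
  thus ?thesis unfolding e .
qed

lemma lo_add: "lin_on sc1 sc2 V T \<Longrightarrow> x \<in> V \<Longrightarrow> y \<in> V \<Longrightarrow> T (x + y) = T x + T y" by (simp add: lin_on_def)
lemma lo_sc: "lin_on sc1 sc2 V T \<Longrightarrow> x \<in> V \<Longrightarrow> T (sc1 c x) = sc2 c (T x)" by (simp add: lin_on_def)

lemma lo_diff:
  assumes "lin_on (fscale (*)) (*) V y" "lin_subspace (fscale (*)) V" "f \<in> V" "g \<in> V"
  shows "y (f - g) = y f - (y g :: 'k::real_normed_field)"
proof -
  have e: "f - g = f + fscale (*) (-1) g" by (simp add: fscale_m1)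
  have m: "fscale (*) (-1) g \<in> V" by (rule ls_sc[OF assms(2,4)])
  have "y (f + fscale (*) (-1) g) = y f + y (fscale (*) (-1) g)" by (rule lo_add[OF assms(1,3) m])
  also have "y (fscale (*) (-1) g) = (-1) * y g" by (rule lo_sc[OF assms(1,4)])
  finally have "y (f + fscale (*) (-1) g) = y f + (-1) * y g" .
  thus ?thesis unfolding e by simp
qed

lemma sn_add: "is_seminorm_on sc V q \<Longrightarrow> x \<in> V \<Longrightarrow> y \<in> V \<Longrightarrow> q (x + y) \<le> q x + q y"
  by (simp add: is_seminorm_on_def)
lemma sn_sc: "is_seminorm_on sc V q \<Longrightarrow> x \<in> V \<Longrightarrow> q (sc c x) = norm c * q x"
  by (simp add: is_seminorm_on_def)

lemma sn_nonneg_f: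
  assumes q: "is_seminorm_on (fscale (*)) V q" and V: "lin_subspace (fscale (*)) V" and f: "f \<in> V"
  shows "0 \<le> q (f :: 'w \<Rightarrow> 'k::real_normed_field)"
proof -
  have m: "fscale (*) (-1) f \<in> V" using ls_sc[OF V f] .
  have "q (f + fscale (*) (-1) f) \<le> q f + q (fscale (*) (-1) f)" by (rule sn_add[OF q f m])
  also have "q (fscale (*) (-1) f) = q f" using sn_sc[OF q f, of "-1"] by simp
  also have "f + fscale (*) (-1) f = fscale (*) 0 f" by (simp add: fscale_def fun_eq_iff)
  also have "q (fscale (*) 0 f) = 0" using sn_sc[OF q f, of 0] by simp
  finally show ?thesis by simp
qed

lemma sn_minus_f:
  assumes q: "is_seminorm_on (fscale (*)) V q" and V: "lin_subspace (fscale (*)) V" and f: "f \<in> V" and g: "g \<in> V"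
  shows "q (f - g) = q (g - (f :: 'w \<Rightarrow> 'k::real_normed_field))"
proof -
  have "f - g = fscale (*) (-1) (g - f)" by (simp add: fscale_m1)
  thus ?thesis using sn_sc[OF q ls_diff[OF V g f], of "-1"] by simp
qed

definition ccont :: "('w \<Rightarrow> 'k::real_normed_field) set \<Rightarrow> ('i \<Rightarrow> ('w \<Rightarrow> 'k) \<Rightarrow> real) \<Rightarrow> (('w \<Rightarrow> 'k) \<Rightarrow> real) \<Rightarrow> bool" where
  "ccont V q h \<longleftrightarrow> (\<exists>J C. finite J \<and> C \<ge> 0 \<and> (\<forall>f\<in>V. \<forall>g\<in>V. \<bar>h f - h g\<bar> \<le> C * (\<Sum>i\<in>J. q i (f - g))))"

locale FS =
  fixes V :: "('w \<Rightarrow> 'k::real_normed_field) set" and q :: "'i \<Rightarrow> ('w \<Rightarrow> 'k) \<Rightarrow> real"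
  assumes lcs: "lcHs (fscale (*)) V q"
begin

lemma V: "lin_subspace (fscale (*)) V" using lcs by (simp add: lcHs_def)
lemma qsn: "is_seminorm_on (fscale (*)) V (q i)" using lcs by (simp add: lcHs_def)
lemma qnn: "f \<in> V \<Longrightarrow> 0 \<le> q i f" by (rule sn_nonneg_f[OF qsn V])
lemma sumq_nn: "f \<in> V \<Longrightarrow> 0 \<le> (\<Sum>i\<in>J. q i f)" by (simp add: sum_nonneg qnn)
lemma sumq_mono: "finite J' \<Longrightarrow> J \<subseteq> J' \<Longrightarrow> f \<in> V \<Longrightarrow> (\<Sum>i\<in>J. q i f) \<le> (\<Sum>i\<in>J'. q i f)"
  by (rule sum_mono2) (auto simp: qnn)

lemma ccont_open:
  assumes "ccont V q h" shows "sn_open V q {f\<in>V. h f < k}"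
proof -
  obtain J C where J: "finite J" "C \<ge> 0" "\<forall>f\<in>V. \<forall>g\<in>V. \<bar>h f - h g\<bar> \<le> C * (\<Sum>i\<in>J. q i (f - g))"
    using assms unfolding ccont_def by blast
  show ?thesis unfolding sn_open_def
  proof (intro conjI ballI)
    show "{f \<in> V. h f < k} \<subseteq> V" by blast
  next
    fix f0 assume f0: "f0 \<in> {f \<in> V. h f < k}"
    define \<eta> where "\<eta> = (k - h f0) / (C + 1)"
    have eta: "\<eta> > 0" using f0 J(2) by (simp add: \<eta>_def)
    have "{g \<in> V. (\<Sum>i\<in>J. q i (g - f0)) < \<eta>} \<subseteq> {f \<in> V. h f < k}"
    proof
      fix g assume g: "g \<in> {g \<in> V. (\<Sum>i\<in>J. q i (g - f0)) < \<eta>}"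
      have gV: "g \<in> V" and lt: "(\<Sum>i\<in>J. q i (g - f0)) < \<eta>" using g by auto
      have f0V: "f0 \<in> V" using f0 by simp
      have "\<bar>h g - h f0\<bar> \<le> C * (\<Sum>i\<in>J. q i (g - f0))" using J(3) gV f0V by blast
      hence "h g - h f0 \<le> C * (\<Sum>i\<in>J. q i (g - f0))" by simp
      also have "\<dots> \<le> C * \<eta>" using lt J(2) by (simp add: mult_left_mono)
      also have "\<dots> < (C + 1) * \<eta>" using eta by simp
      also have "\<dots> = k - h f0" using J(2) by (simp add: \<eta>_def)
      finally show "g \<in> {f \<in> V. h f < k}" using gV by simp
    qed
    thus "\<exists>J \<epsilon>. finite J \<and> 0 < \<epsilon> \<and> {y \<in> V. (\<Sum>i\<in>J. q i (y - f0)) < \<epsilon>} \<subseteq> {f \<in> V. h f < k}"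
      using J(1) eta by blast
  qed
qed

lemma ccont_add:
  assumes "ccont V q h1" "ccont V q h2" shows "ccont V q (\<lambda>f. h1 f + h2 f)"
proof -
  obtain J1 C1 where 1: "finite J1" "C1 \<ge> 0" "\<forall>f\<in>V. \<forall>g\<in>V. \<bar>h1 f - h1 g\<bar> \<le> C1 * (\<Sum>i\<in>J1. q i (f - g))"
    using assms(1) unfolding ccont_def by blast
  obtain J2 C2 where 2: "finite J2" "C2 \<ge> 0" "\<forall>f\<in>V. \<forall>g\<in>V. \<bar>h2 f - h2 g\<bar> \<le> C2 * (\<Sum>i\<in>J2. q i (f - g))"
    using assms(2) unfolding ccont_def by blast
  have "\<forall>f\<in>V. \<forall>g\<in>V. \<bar>(h1 f + h2 f) - (h1 g + h2 g)\<bar> \<le> (C1 + C2) * (\<Sum>i\<in>J1 \<union> J2. q i (f - g))"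
  proof (intro ballI)
    fix f g assume f: "f \<in> V" and g: "g \<in> V"
    have d: "f - g \<in> V" by (rule ls_diff[OF V f g])
    have "\<bar>(h1 f + h2 f) - (h1 g + h2 g)\<bar> \<le> \<bar>h1 f - h1 g\<bar> + \<bar>h2 f - h2 g\<bar>" by simp
    also have "\<dots> \<le> C1 * (\<Sum>i\<in>J1. q i (f - g)) + C2 * (\<Sum>i\<in>J2. q i (f - g))"
      by (rule add_mono) (use 1(3) 2(3) f g in blast)+
    also have "\<dots> \<le> C1 * (\<Sum>i\<in>J1 \<union> J2. q i (f - g)) + C2 * (\<Sum>i\<in>J1 \<union> J2. q i (f - g))"
    proof (rule add_mono)
      have "finite (J1 \<union> J2)" using 1 2 by simp
      hence m1: "(\<Sum>i\<in>J1. q i (f - g)) \<le> (\<Sum>i\<in>J1 \<union> J2. q i (f - g))"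
        and m2: "(\<Sum>i\<in>J2. q i (f - g)) \<le> (\<Sum>i\<in>J1 \<union> J2. q i (f - g))"
        using sumq_mono[OF _ _ d] by blast+
      show "C1 * (\<Sum>i\<in>J1. q i (f - g)) \<le> C1 * (\<Sum>i\<in>J1 \<union> J2. q i (f - g))"
        by (rule mult_left_mono[OF m1 1(2)])
      show "C2 * (\<Sum>i\<in>J2. q i (f - g)) \<le> C2 * (\<Sum>i\<in>J1 \<union> J2. q i (f - g))"
        by (rule mult_left_mono[OF m2 2(2)])
    qed
    finally show "\<bar>(h1 f + h2 f) - (h1 g + h2 g)\<bar> \<le> (C1 + C2) * (\<Sum>i\<in>J1 \<union> J2. q i (f - g))"
      by (simp add: distrib_right)
  qed
  thus ?thesis unfolding ccont_def using 1 2 by (intro exI[of _ "J1 \<union> J2"] exI[of _ "C1 + C2"]) auto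
qed

lemma ccont_scale:
  assumes "ccont V q h" shows "ccont V q (\<lambda>f. c * h f)"
proof -
  obtain J C where J: "finite J" "C \<ge> 0" "\<forall>f\<in>V. \<forall>g\<in>V. \<bar>h f - h g\<bar> \<le> C * (\<Sum>i\<in>J. q i (f - g))"
    using assms unfolding ccont_def by blast
  have "\<forall>f\<in>V. \<forall>g\<in>V. \<bar>c * h f - c * h g\<bar> \<le> (\<bar>c\<bar> * C) * (\<Sum>i\<in>J. q i (f - g))"
  proof (intro ballI)
    fix f g assume f: "f \<in> V" and g: "g \<in> V"
    have "\<bar>c * h f - c * h g\<bar> = \<bar>c\<bar> * \<bar>h f - h g\<bar>" by (simp add: abs_mult[symmetric] right_diff_distrib)
    also have "\<dots> \<le> \<bar>c\<bar> * (C * (\<Sum>i\<in>J. q i (f - g)))" using J(3) f g by (simp add: mult_left_mono)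
    finally show "\<bar>c * h f - c * h g\<bar> \<le> (\<bar>c\<bar> * C) * (\<Sum>i\<in>J. q i (f - g))" by (simp add: mult.assoc)
  qed
  thus ?thesis unfolding ccont_def using J by (intro exI[of _ J] exI[of _ "\<bar>c\<bar> * C"]) auto
qed

lemma ccont_dual:
  assumes y: "y \<in> sn_dual (fscale (*)) V q" shows "ccont V q (\<lambda>f. norm (y f))"
proof -
  have lin: "lin_on (fscale (*)) (*) V y" using y by (simp add: sn_dual_def)
  obtain J C where J: "finite J" "\<forall>f\<in>V. norm (y f) \<le> C * (\<Sum>i\<in>J. q i f)"
    using y unfolding sn_dual_def sn_cont_def by blast
  have "\<forall>f\<in>V. \<forall>g\<in>V. \<bar>norm (y f) - norm (y g)\<bar> \<le> \<bar>C\<bar> * (\<Sum>i\<in>J. q i (f - g))"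
  proof (intro ballI)
    fix f g assume f: "f \<in> V" and g: "g \<in> V"
    have d: "f - g \<in> V" by (rule ls_diff[OF V f g])
    have "\<bar>norm (y f) - norm (y g)\<bar> \<le> norm (y f - y g)" by (rule norm_triangle_ineq3)
    also have "y f - y g = y (f - g)" using lo_diff[OF lin V f g] by simp
    also have "norm (y (f - g)) \<le> C * (\<Sum>i\<in>J. q i (f - g))" using J(2) d by blast
    also have "\<dots> \<le> \<bar>C\<bar> * (\<Sum>i\<in>J. q i (f - g))" by (rule mult_right_mono) (auto simp: sumq_nn[OF d])
    finally show "\<bar>norm (y f) - norm (y g)\<bar> \<le> \<bar>C\<bar> * (\<Sum>i\<in>J. q i (f - g))" .
  qed
  thus ?thesis unfolding ccont_def using J by (intro exI[of _ J] exI[of _ "\<bar>C\<bar>"]) auto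
qed

lemma compact_cover_idx:
  assumes K: "sn_compact V q K" and op: "\<forall>i\<in>I. sn_open V q (Op i)" and cov: "K \<subseteq> \<Union>(Op ` I)"
  shows "\<exists>I'\<subseteq>I. finite I' \<and> K \<subseteq> \<Union>(Op ` I')"
proof -
  have "\<forall>W\<in>Op ` I. sn_open V q W" using op by blast
  moreover have "\<forall>\<U>. (\<forall>W\<in>\<U>. sn_open V q W) \<and> K \<subseteq> \<Union>\<U> \<longrightarrow> (\<exists>\<V>\<subseteq>\<U>. finite \<V> \<and> K \<subseteq> \<Union>\<V>)"
    using K unfolding sn_compact_def by blast
  ultimately have "\<exists>\<V>\<subseteq>Op ` I. finite \<V> \<and> K \<subseteq> \<Union>\<V>" using cov by blast
  then obtain \<V> where V: "\<V> \<subseteq> Op ` I" "finite \<V>" "K \<subseteq> \<Union>\<V>" by blast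
  then obtain I' where "I' \<subseteq> I" "finite I'" "\<V> = Op ` I'" by (meson finite_subset_image)
  thus ?thesis using V by blast
qed

lemma compact_bdd:
  assumes K: "sn_compact V q K" and h: "ccont V q h" shows "\<exists>M. \<forall>f\<in>K. h f \<le> M"
proof -
  define Op where "Op n = {f\<in>V. h f < real n}" for n :: nat
  have "K \<subseteq> V" using K by (simp add: sn_compact_def)
  have "f \<in> \<Union>(Op ` UNIV)" if "f \<in> K" for f
  proof -
    obtain n where "h f < real n" using reals_Archimedean2 by blast
    thus ?thesis using that \<open>K \<subseteq> V\<close> unfolding Op_def by blast
  qed
  hence cv: "K \<subseteq> \<Union>(Op ` UNIV)" by blast
  have op: "\<forall>n\<in>UNIV. sn_open V q (Op n)" unfolding Op_def using ccont_open[OF h] by simp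
  have "\<exists>I'\<subseteq>UNIV. finite I' \<and> K \<subseteq> \<Union>(Op ` I')" by (rule compact_cover_idx[OF K op cv])
  then obtain I where I: "finite I" "K \<subseteq> \<Union>(Op ` I)" by blast
  have "h f \<le> real (Max (insert 0 I))" if fK: "f \<in> K" for f
  proof -
    obtain n where n: "n \<in> I" "f \<in> Op n" using I fK by blast
    have "h f < real n" using n Op_def by simp
    moreover have "n \<le> Max (insert 0 I)" using I n by simp
    ultimately show ?thesis by linarith
  qed
  thus ?thesis by blast
qed

lemma dual_add:
  assumes "y1 \<in> sn_dual (fscale (*)) V q" "y2 \<in> sn_dual (fscale (*)) V q"
  shows "(\<lambda>f. y1 f + y2 f) \<in> sn_dual (fscale (*)) V q"
proof -
  have l1: "lin_on (fscale (*)) (*) V y1" and l2: "lin_on (fscale (*)) (*) V y2"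
    and z1: "\<forall>x. x \<notin> V \<longrightarrow> y1 x = 0" and z2: "\<forall>x. x \<notin> V \<longrightarrow> y2 x = 0"
    using assms by (auto simp: sn_dual_def)
  obtain J1 C1 where 1: "finite J1" "\<forall>f\<in>V. norm (y1 f) \<le> C1 * (\<Sum>i\<in>J1. q i f)"
    using assms(1) unfolding sn_dual_def sn_cont_def by blast
  obtain J2 C2 where 2: "finite J2" "\<forall>f\<in>V. norm (y2 f) \<le> C2 * (\<Sum>i\<in>J2. q i f)"
    using assms(2) unfolding sn_dual_def sn_cont_def by blast
  have "\<forall>f\<in>V. norm (y1 f + y2 f) \<le> (\<bar>C1\<bar> + \<bar>C2\<bar>) * (\<Sum>i\<in>J1 \<union> J2. q i f)"
  proof
    fix f assume f: "f \<in> V"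
    have "norm (y1 f + y2 f) \<le> norm (y1 f) + norm (y2 f)" by (rule norm_triangle_ineq)
    also have "\<dots> \<le> C1 * (\<Sum>i\<in>J1. q i f) + C2 * (\<Sum>i\<in>J2. q i f)"
      by (rule add_mono) (use 1(2) 2(2) f in blast)+
    also have "\<dots> \<le> \<bar>C1\<bar> * (\<Sum>i\<in>J1 \<union> J2. q i f) + \<bar>C2\<bar> * (\<Sum>i\<in>J1 \<union> J2. q i f)"
    proof (rule add_mono)
      have fin12: "finite (J1 \<union> J2)" using 1 2 by simp
      hence m1: "(\<Sum>i\<in>J1. q i f) \<le> (\<Sum>i\<in>J1 \<union> J2. q i f)"
        and m2: "(\<Sum>i\<in>J2. q i f) \<le> (\<Sum>i\<in>J1 \<union> J2. q i f)"
        using sumq_mono[OF _ _ f] by blast+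
      have "C1 * (\<Sum>i\<in>J1. q i f) \<le> \<bar>C1\<bar> * (\<Sum>i\<in>J1. q i f)" by (rule mult_right_mono) (auto simp: sumq_nn f)
      also have "\<dots> \<le> \<bar>C1\<bar> * (\<Sum>i\<in>J1 \<union> J2. q i f)" by (rule mult_left_mono[OF m1]) simp
      finally show "C1 * (\<Sum>i\<in>J1. q i f) \<le> \<bar>C1\<bar> * (\<Sum>i\<in>J1 \<union> J2. q i f)" .
      have "C2 * (\<Sum>i\<in>J2. q i f) \<le> \<bar>C2\<bar> * (\<Sum>i\<in>J2. q i f)" by (rule mult_right_mono) (auto simp: sumq_nn f)
      also have "\<dots> \<le> \<bar>C2\<bar> * (\<Sum>i\<in>J1 \<union> J2. q i f)" by (rule mult_left_mono[OF m2]) simp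
      finally show "C2 * (\<Sum>i\<in>J2. q i f) \<le> \<bar>C2\<bar> * (\<Sum>i\<in>J1 \<union> J2. q i f)" .
    qed
    finally show "norm (y1 f + y2 f) \<le> (\<bar>C1\<bar> + \<bar>C2\<bar>) * (\<Sum>i\<in>J1 \<union> J2. q i f)" by (simp add: distrib_right)
  qed
  moreover have "lin_on (fscale (*)) (*) V (\<lambda>f. y1 f + y2 f)"
    using l1 l2 unfolding lin_on_def by (simp add: distrib_left)
  ultimately show ?thesis using 1 2 z1 z2 unfolding sn_dual_def sn_cont_def by auto
qed

lemma dual_scale:
  assumes "y \<in> sn_dual (fscale (*)) V q"
  shows "(\<lambda>f. c * y f) \<in> sn_dual (fscale (*)) V q"
proof -
  have l: "lin_on (fscale (*)) (*) V y" and z: "\<forall>x. x \<notin> V \<longrightarrow> y x = 0"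
    using assms by (auto simp: sn_dual_def)
  obtain J C where 1: "finite J" "\<forall>f\<in>V. norm (y f) \<le> C * (\<Sum>i\<in>J. q i f)"
    using assms unfolding sn_dual_def sn_cont_def by blast
  have "\<forall>f\<in>V. norm (c * y f) \<le> (norm c * C) * (\<Sum>i\<in>J. q i f)"
    using 1 by (simp add: norm_mult mult.assoc mult_left_mono)
  moreover have "lin_on (fscale (*)) (*) V (\<lambda>f. c * y f)"
    using l unfolding lin_on_def by (simp add: distrib_left mult.left_commute)
  ultimately show ?thesis using 1 z unfolding sn_dual_def sn_cont_def by auto
qed

lemma dual_zero: "(\<lambda>f. 0) \<in> sn_dual (fscale (*)) V q"
  unfolding sn_dual_def sn_cont_def lin_on_def by (simp, rule exI[of _ "{}"], simp)

end

lemma geo_sum: "n \<le> m \<Longrightarrow> (\<Sum>k\<in>{n..<m}. (1/2::real)^k) = 2 * (1/2)^n - 2 * (1/2)^m"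
proof (induction m)
  case 0 thus ?case by simp
next
  case (Suc m)
  show ?case
  proof (cases "n = Suc m")
    case True thus ?thesis by simp
  next
    case False
    hence nm: "n \<le> m" using Suc.prems by simp
    have "(\<Sum>k\<in>{n..<Suc m}. (1/2::real)^k) = (\<Sum>k\<in>{n..<m}. (1/2::real)^k) + (1/2)^m"
      using nm by simp
    also have "\<dots> = 2 * (1/2)^n - 2 * (1/2)^m + (1/2)^m" using Suc.IH[OF nm] by simp
    also have "\<dots> = 2 * (1/2)^n - 2 * (1/2)^Suc m" by simp
    finally show ?thesis .
  qed
qed

lemma geo_sum_le: "(\<Sum>k\<in>{n..<m}. (1/2::real)^k) \<le> 2 * (1/2)^n"
proof (cases "n \<le> m")
  case True thus ?thesis using geo_sum[OF True] by simp
next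
  case False thus ?thesis by simp
qed

locale ES = module smul
  for smul :: "'k::real_normed_field \<Rightarrow> 'e::ab_group_add \<Rightarrow> 'e" +
  fixes p :: "'a \<Rightarrow> 'e \<Rightarrow> real"
  assumes lcs: "lcHs smul UNIV p"
begin

lemma psn: "is_seminorm_on smul UNIV (p a)" using lcs by (simp add: lcHs_def)
lemma p_add: "p a (x + y) \<le> p a x + p a y" using psn unfolding is_seminorm_on_def by blast
lemma p_sc: "p a (smul c x) = norm c * p a x" using psn unfolding is_seminorm_on_def by blast
lemma p_nn: "0 \<le> p a x"
proof -
  have "p a (x + smul (-1) x) \<le> p a x + p a (smul (-1) x)" by (rule p_add)
  also have "p a (smul (-1) x) = p a x" using p_sc[of a "-1" x] by simp
  also have "x + smul (-1) x = smul 0 x" by simp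
  also have "p a (smul 0 x) = 0" using p_sc[of a 0 x] by simp
  finally show ?thesis by simp
qed
lemma p_sym: "p a (x - y) = p a (y - x)"
proof -
  have "x - y = smul (-1) (y - x)" by simp
  thus ?thesis using p_sc[of a "-1" "y - x"] by simp
qed
lemma p_tri: "p a x \<le> p a y + p a (x - y)"
  using p_add[of a y "x - y"] by simp

definition Dset :: "('a \<Rightarrow> real) \<Rightarrow> 'e set" where
  "Dset M = {v. \<forall>a. p a v \<le> M a}"

lemma D_0: "(\<forall>a. M a \<ge> 0) \<Longrightarrow> 0 \<in> Dset M"
  unfolding Dset_def using p_sc[of _ 0 0] by simp

lemma D_closed: "sn_closed UNIV p (Dset M)"
  unfolding sn_closed_def sn_open_def
proof (intro conjI ballI)
  fix v assume v: "v \<in> UNIV - Dset M"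
  have "\<not> (\<forall>a. p a v \<le> M a)" using v unfolding Dset_def by simp
  then obtain a where "\<not> p a v \<le> M a" by blast
  hence a: "p a v > M a" by simp
  have "{w\<in>UNIV. (\<Sum>i\<in>{a}. p i (w - v)) < p a v - M a} \<subseteq> UNIV - Dset M"
  proof
    fix w assume "w \<in> {w\<in>UNIV. (\<Sum>i\<in>{a}. p i (w - v)) < p a v - M a}"
    hence lt: "p a (w - v) < p a v - M a" by simp
    have "p a v \<le> p a w + p a (v - w)" by (rule p_tri)
    also have "p a (v - w) = p a (w - v)" by (rule p_sym)
    finally have "p a w > M a" using lt by simp
    hence "\<not> p a w \<le> M a" by simp
    thus "w \<in> UNIV - Dset M" unfolding Dset_def by blast
  qed
  thus "\<exists>J \<epsilon>. finite J \<and> 0 < \<epsilon> \<and> {w\<in>UNIV. (\<Sum>i\<in>J. p i (w - v)) < \<epsilon>} \<subseteq> UNIV - Dset M"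
    using a by (intro exI[of _ "{a}"] exI[of _ "p a v - M a"]) simp
qed (rule subset_UNIV)+

lemma D_bounded: "sn_bounded UNIV p (Dset M)"
  unfolding sn_bounded_def Dset_def by blast

lemma D_absconv: "(\<forall>a. M a \<ge> 0) \<Longrightarrow> abs_convex smul (Dset M)"
  unfolding abs_convex_def
proof (intro ballI allI impI)
  fix x y and c d :: 'k assume M: "\<forall>a. M a \<ge> 0" and x: "x \<in> Dset M" and y: "y \<in> Dset M" and cd: "norm c + norm d \<le> 1"
  show "smul c x + smul d y \<in> Dset M" unfolding Dset_def
  proof (rule, rule)
    fix a
    have "p a (smul c x + smul d y) \<le> norm c * p a x + norm d * p a y" using p_add p_sc by metis
    also have "\<dots> \<le> norm c * M a + norm d * M a"
      using x y unfolding Dset_def by (intro add_mono mult_left_mono) auto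
    also have "\<dots> = (norm c + norm d) * M a" by (simp add: distrib_right)
    also have "\<dots> \<le> 1 * M a" using cd M by (intro mult_right_mono) auto
    finally show "p a (smul c x + smul d y) \<le> M a" by simp
  qed
qed

definition ED :: "'e set \<Rightarrow> 'e set" where "ED D = (\<Union>n::nat. smul (of_nat n) ` D)"

definition Tset :: "'e set \<Rightarrow> 'e \<Rightarrow> real set" where
  "Tset D v = {t::real. t > 0 \<and> v \<in> smul (of_real t) ` D}"

lemma gauge_eq: "gauge_fn smul D v = Inf (Tset D v)"
  unfolding gauge_fn_def Tset_def ..

lemma Tset_ne: assumes "0 \<in> D" "v \<in> ED D" shows "Tset D v \<noteq> {}"
proof -
  obtain n d where nd: "d \<in> D" "v = smul (of_nat n) d" using assms(2) unfolding ED_def by blast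
  show ?thesis
  proof (cases "n = 0")
    case True
    hence "v = smul (of_real 1) 0" using nd by simp
    hence "v \<in> smul (of_real 1) ` D" by (rule image_eqI[OF _ assms(1)])
    hence "1 \<in> Tset D v" unfolding Tset_def by simp
    thus ?thesis by blast
  next
    case False
    hence "real n > 0" by simp
    moreover have "v = smul (of_real (real n)) d" using nd by simp
    moreover have "v \<in> smul (of_real (real n)) ` D" by (rule image_eqI[OF _ nd(1)]) (use nd in simp)
    ultimately have "real n \<in> Tset D v" unfolding Tset_def by simp
    thus ?thesis by blast
  qed
qed

lemma gauge_bound:
  assumes D0: "0 \<in> D" and v: "v \<in> ED D" and K: "K \<ge> 0"
    and hom: "\<And>t w. t > 0 \<Longrightarrow> \<phi> (smul (of_real t) w) = t * \<phi> w"
    and bd: "\<And>d. d \<in> D \<Longrightarrow> \<phi> d \<le> K"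
  shows "\<phi> v \<le> K * gauge_fn smul D v"
proof -
  have all: "\<phi> v \<le> K * t" if tT: "t \<in> Tset D v" for t
  proof -
    obtain d where d: "t > 0" "d \<in> D" "v = smul (of_real t) d" using tT unfolding Tset_def by blast
    have "\<phi> v = t * \<phi> d" using hom d by simp
    also have "\<dots> \<le> t * K" using bd[OF d(2)] d(1) by (simp add: mult_left_mono)
    finally show ?thesis by (simp add: mult.commute)
  qed
  have ne: "Tset D v \<noteq> {}" by (rule Tset_ne[OF D0 v])
  show ?thesis
  proof (cases "K = 0")
    case True
    obtain t where "t \<in> Tset D v" using ne by blast
    thus ?thesis using all True by fastforce
  next
    case False
    hence Kp: "K > 0" using K by simp
    have "\<phi> v / K \<le> Inf (Tset D v)"
      by (rule cInf_greatest[OF ne]) (use all Kp in \<open>simp add: field_simps\<close>)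
    thus ?thesis using Kp by (simp add: gauge_eq field_simps)
  qed
qed

lemma gauge_le1:
  assumes d: "d \<in> D" shows "gauge_fn smul D d \<le> 1"
proof -
  have "1 \<in> Tset D d" unfolding Tset_def using d by (intro CollectI conjI) (simp, rule image_eqI[of _ _ d], simp_all)
  moreover have "bdd_below (Tset D d)" unfolding Tset_def bdd_below_def by (intro exI[of _ 0]) auto
  ultimately show ?thesis unfolding gauge_eq by (rule cInf_lower)
qed

lemma D_in_ED: "d \<in> D \<Longrightarrow> d \<in> ED D"
  unfolding ED_def by (rule UN_I[of 1]) simp_all

end

context ES begin

lemma series_limit:
  assumes ban: "sn_banach smul V g"
    and w: "\<And>n. w n \<in> V" and wb: "\<And>n. g (w n) \<le> A * (1/2)^n"
  shows "\<exists>e\<in>V. (\<lambda>N. g ((\<Sum>n<N. w n) - e)) \<longlonglongrightarrow> 0 \<and> g e \<le> 2 * A"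
proof -
  have V: "lin_subspace smul V" and gsn: "is_seminorm_on smul V g"
    and cpl: "\<forall>s. (\<forall>n. s n \<in> V) \<and> (\<forall>\<epsilon>>0. \<exists>N. \<forall>m\<ge>N. \<forall>n\<ge>N. g (s m - s n) < \<epsilon>)
          \<longrightarrow> (\<exists>x\<in>V. (\<lambda>n. g (s n - x)) \<longlonglongrightarrow> 0)"
    using ban unfolding sn_banach_def by blast+
  have V0: "0 \<in> V" by (rule ls_0[OF V])
  have Vadd: "x \<in> V \<Longrightarrow> y \<in> V \<Longrightarrow> x + y \<in> V" for x y by (rule ls_add[OF V])
  have Vsc: "x \<in> V \<Longrightarrow> smul c x \<in> V" for c x by (rule ls_sc[OF V])
  have Vdiff: "x \<in> V \<Longrightarrow> y \<in> V \<Longrightarrow> x - y \<in> V" for x y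
  proof -
    assume x: "x \<in> V" and y: "y \<in> V"
    have "x + smul (-1) y \<in> V" by (rule Vadd[OF x Vsc[OF y]])
    thus "x - y \<in> V" by simp
  qed
  have gadd: "x \<in> V \<Longrightarrow> y \<in> V \<Longrightarrow> g (x + y) \<le> g x + g y" for x y by (rule sn_add[OF gsn])
  have gsc: "x \<in> V \<Longrightarrow> g (smul c x) = norm c * g x" for c x by (rule sn_sc[OF gsn])
  have gnn: "0 \<le> g x" if x: "x \<in> V" for x
  proof -
    have "g (x + smul (-1) x) \<le> g x + g (smul (-1) x)" by (rule gadd[OF x Vsc[OF x]])
    also have "g (smul (-1) x) = g x" using gsc[OF x, of "-1"] by simp
    also have "x + smul (-1) x = smul 0 x" by simp
    also have "g (smul 0 x) = 0" using gsc[OF x, of 0] by simp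
    finally show ?thesis by simp
  qed
  have gsym: "g (x - y) = g (y - x)" if "x \<in> V" "y \<in> V" for x y
  proof -
    have "x - y = smul (-1) (y - x)" by simp
    thus ?thesis using gsc[OF Vdiff[OF that(2,1)], of "-1"] by simp
  qed
  have A: "A \<ge> 0" using gnn[OF w[of 0]] wb[of 0] by simp
  define S where "S N = (\<Sum>n<N. w n)" for N
  have sumV: "(\<Sum>n\<in>F. w n) \<in> V" if "finite F" for F
    using that by (induction F rule: finite_induct) (simp_all add: V0 Vadd w)
  have gsum: "g (\<Sum>n\<in>F. w n) \<le> (\<Sum>n\<in>F. g (w n))" if "finite F" for F
    using that
  proof (induction F rule: finite_induct)
    case empty thus ?case using gsc[OF V0, of 0] by simp
  next
    case (insert x F)
    have "g (\<Sum>n\<in>insert x F. w n) = g (w x + (\<Sum>n\<in>F. w n))" using insert.hyps by simp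
    also have "\<dots> \<le> g (w x) + g (\<Sum>n\<in>F. w n)" by (rule gadd[OF w sumV[OF insert.hyps(1)]])
    also have "\<dots> \<le> g (w x) + (\<Sum>n\<in>F. g (w n))" using insert.IH by simp
    finally show ?case using insert.hyps by simp
  qed
  have SV: "S N \<in> V" for N unfolding S_def by (rule sumV) simp
  have Sdiff: "S m - S n = (\<Sum>k\<in>{n..<m}. w k)" if "n \<le> m" for n m
    using that
  proof (induction m)
    case 0 thus ?case by simp
  next
    case (Suc m)
    show ?case
    proof (cases "n = Suc m")
      case True thus ?thesis by simp
    next
      case False
      hence nm: "n \<le> m" using Suc.prems by simp
      have "S (Suc m) - S n = (S m - S n) + w m" by (simp add: S_def)
      also have "\<dots> = (\<Sum>k\<in>{n..<m}. w k) + w m" using Suc.IH[OF nm] by simp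
      also have "\<dots> = (\<Sum>k\<in>{n..<Suc m}. w k)" using nm by (simp add: add.commute)
      finally show ?thesis .
    qed
  qed
  have gsumA: "(\<Sum>k\<in>F. g (w k)) \<le> A * (\<Sum>k\<in>F. (1/2::real)^k)" for F
    by (simp add: sum_distrib_left sum_mono wb)
  have gS: "g (S m - S n) \<le> 2 * A * (1/2)^n" if "n \<le> m" for n m
  proof -
    have "g (S m - S n) \<le> (\<Sum>k\<in>{n..<m}. g (w k))" unfolding Sdiff[OF that] by (rule gsum) simp
    also have "\<dots> \<le> A * (\<Sum>k\<in>{n..<m}. (1/2::real)^k)" by (rule gsumA)
    also have "\<dots> \<le> A * (2 * (1/2)^n)" by (rule mult_left_mono[OF geo_sum_le A])
    finally show ?thesis by simp
  qed
  have cauchy: "\<forall>\<epsilon>>0. \<exists>N. \<forall>m\<ge>N. \<forall>n\<ge>N. g (S m - S n) < \<epsilon>"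
  proof (intro allI impI)
    fix \<epsilon> :: real assume e: "\<epsilon> > 0"
    have "\<epsilon> / (2 * A + 1) > 0" using e A by simp
    then obtain N where N: "(1/2::real)^N < \<epsilon> / (2 * A + 1)" using real_arch_pow_inv[of "\<epsilon> / (2 * A + 1)" "1/2"] by auto
    have bnd: "2 * A * (1/2)^n < \<epsilon>" if "n \<ge> N" for n
    proof -
      have "(1/2::real)^n \<le> (1/2)^N" using that by (simp add: power_decreasing)
      hence "2 * A * (1/2)^n \<le> 2 * A * (1/2)^N" using A by (simp add: mult_left_mono)
      also have "\<dots> \<le> 2 * A * (\<epsilon> / (2 * A + 1))" by (rule mult_left_mono) (use N A in simp_all)
      also have "\<dots> < \<epsilon>" using e A by (simp add: field_simps)
      finally show ?thesis .
    qed
    show "\<exists>N. \<forall>m\<ge>N. \<forall>n\<ge>N. g (S m - S n) < \<epsilon>"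
    proof (intro exI allI impI)
      fix m n assume m: "m \<ge> N" and n: "n \<ge> N"
      show "g (S m - S n) < \<epsilon>"
      proof (cases "n \<le> m")
        case True thus ?thesis using gS[OF True] bnd[OF n] by simp
      next
        case False
        hence "m \<le> n" by simp
        thus ?thesis using gS[of m n] bnd[OF m] gsym[OF SV SV, of m n] by simp
      qed
    qed
  qed
  obtain e where e: "e \<in> V" "(\<lambda>n. g (S n - e)) \<longlonglongrightarrow> 0" using cpl SV cauchy by blast
  have gSN: "g (S N) \<le> 2 * A" for N
  proof -
    have "g (S N) = g (S N - S 0)" by (simp add: S_def)
    also have "\<dots> \<le> 2 * A * (1/2)^0" by (rule gS) simp
    finally show ?thesis by simp
  qed
  have "g e - 2 * A \<le> g (S N - e)" for N
  proof -
    have "g e = g (S N + (e - S N))" by simp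
    also have "\<dots> \<le> g (S N) + g (e - S N)" by (rule gadd[OF SV Vdiff[OF e(1) SV]])
    also have "g (e - S N) = g (S N - e)" by (rule gsym[OF e(1) SV])
    finally show ?thesis using gSN[of N] by simp
  qed
  hence "g e - 2 * A \<le> 0" by (intro LIMSEQ_le_const[OF e(2)]) auto
  thus ?thesis using e unfolding S_def by auto
qed

end

locale MS =
  fixes smul :: "'k::{real_normed_field,euclidean_space} \<Rightarrow> 'e::ab_group_add \<Rightarrow> 'e"
    and p :: "'a \<Rightarrow> 'e \<Rightarrow> real"
    and G :: "('e \<Rightarrow> 'k) set"
    and Fs :: "('w \<Rightarrow> 'k) set" and qF :: "'i \<Rightarrow> ('w \<Rightarrow> 'k) \<Rightarrow> real"
    and FE :: "('w \<Rightarrow> 'e) set"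
    and TK :: "('w \<Rightarrow> 'k) \<Rightarrow> 'x \<Rightarrow> 'k" and TE :: "('w \<Rightarrow> 'e) \<Rightarrow> 'x \<Rightarrow> 'e"
    and \<nu> :: "'x \<Rightarrow> real" and U :: "'x set" and f :: "'x \<Rightarrow> 'e"
  assumes E_mod: "module smul"
    and E_lcHs: "lcHs smul UNIV p"
    and E_lc: "locally_complete smul p"
    and G_sub: "G \<subseteq> sn_dual smul UNIV p"
    and G_sep: "separating G"
    and F_lcHs: "lcHs (fscale (*)) Fs qF"
    and TK_lin: "lin_on (fscale (*)) (fscale (*)) Fs TK"
    and cons: "consistent_fam smul p Fs qF FE TE TK"
    and weight: "\<forall>x. \<nu> x > 0"
    and banach: "sn_banach (fscale (*)) (Fnu Fs TK \<nu>) (Fnu_norm TK \<nu>)"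
    and ball_compact: "sn_compact Fs qF (ball_Fnu Fs TK \<nu>)"
    and fixU: "fixes_topology Fs TK \<nu> U"
    and f_in: "f \<in> FnuG_lb smul p Fs TK \<nu> G U"
begin

interpretation E: ES smul p using E_mod E_lcHs by (simp add: ES_def ES_axioms_def)
interpretation F: FS Fs qF using F_lcHs by (simp add: FS_def)

abbreviation "Fn \<equiv> Fnu Fs TK \<nu>"
abbreviation "N \<equiv> Fnu_norm TK \<nu>"
abbreviation "B \<equiv> ball_Fnu Fs TK \<nu>"
abbreviation "Y \<equiv> Fdual Fs qF"

lemma Y_def': "Y = sn_dual (fscale (*)) Fs qF" by (simp add: Fdual_def)

lemma Fn_sub: "Fn \<subseteq> Fs" unfolding Fnu_def by blast
lemma Fn_ls: "lin_subspace (fscale (*)) Fn" using banach by (simp add: sn_banach_def)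
lemma N_sn: "is_seminorm_on (fscale (*)) Fn N" using banach by (simp add: sn_banach_def)
lemma N_def0: "b \<in> Fn \<Longrightarrow> N b = 0 \<Longrightarrow> b = 0" using banach by (simp add: sn_banach_def)
lemma N_nn: "b \<in> Fn \<Longrightarrow> 0 \<le> N b" by (rule sn_nonneg_f[OF N_sn Fn_ls])

lemma TK_add: "b1 \<in> Fs \<Longrightarrow> b2 \<in> Fs \<Longrightarrow> TK (b1 + b2) x = TK b1 x + TK b2 x"
  using lo_add[OF TK_lin] by simp
lemma TK_sc: "b \<in> Fs \<Longrightarrow> TK (fscale (*) c b) x = c * TK b x"
  using lo_sc[OF TK_lin, of b c] by (simp add: fscale_def)

lemma TK_le_N: assumes b: "b \<in> Fn" shows "norm (TK b x) * \<nu> x \<le> N b"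
proof -
  have "bdd_above (range (\<lambda>x. norm (TK b x) * \<nu> x))" using b by (simp add: Fnu_def)
  thus ?thesis unfolding Fnu_norm_def by (rule cSUP_upper[OF UNIV_I])
qed

lemma B_sub: "B \<subseteq> Fn" unfolding ball_Fnu_def by blast
lemma B_N: "b \<in> B \<Longrightarrow> N b \<le> 1" unfolding ball_Fnu_def by blast
lemma B_0: "0 \<in> B"
proof -
  have "N 0 = 0" using sn_sc[OF N_sn ls_0[OF Fn_ls], of 0] fscale_0[of "0::'w \<Rightarrow> 'k"] by simp
  thus ?thesis unfolding ball_Fnu_def using ls_0[OF Fn_ls] by simp
qed

lemma B_absconv: "abs_convex (fscale (*)) B"
  unfolding abs_convex_def
proof (intro ballI allI impI)
  fix x y and a b :: 'k assume x: "x \<in> B" and y: "y \<in> B" and ab: "norm a + norm b \<le> 1"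
  have xF: "x \<in> Fn" and yF: "y \<in> Fn" using x y B_sub by auto
  have in1: "fscale (*) a x \<in> Fn" "fscale (*) b y \<in> Fn" using ls_sc[OF Fn_ls] xF yF by auto
  have inF: "fscale (*) a x + fscale (*) b y \<in> Fn" by (rule ls_add[OF Fn_ls in1])
  have "N (fscale (*) a x + fscale (*) b y) \<le> N (fscale (*) a x) + N (fscale (*) b y)"
    by (rule sn_add[OF N_sn in1])
  also have "\<dots> = norm a * N x + norm b * N y" using sn_sc[OF N_sn xF] sn_sc[OF N_sn yF] by simp
  also have "\<dots> \<le> norm a * 1 + norm b * 1"
    using B_N[OF x] B_N[OF y] by (intro add_mono mult_left_mono) auto
  also have "\<dots> \<le> 1" using ab by simp
  finally show "fscale (*) a x + fscale (*) b y \<in> B" unfolding ball_Fnu_def using inF by simp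
qed

definition sy :: "(('w \<Rightarrow> 'k) \<Rightarrow> 'k) \<Rightarrow> real" where
  "sy y = Sup (insert 0 ((\<lambda>b. norm (y b)) ` B))"

lemma Y_lin: "y \<in> Y \<Longrightarrow> lin_on (fscale (*)) (*) Fs y" by (simp add: Fdual_def sn_dual_def)
lemma Y_out: "y \<in> Y \<Longrightarrow> g \<notin> Fs \<Longrightarrow> y g = 0" by (simp add: Fdual_def sn_dual_def)

lemma Y_bdd: assumes y: "y \<in> Y" shows "bdd_above (insert 0 ((\<lambda>b. norm (y b)) ` B))"
proof -
  have "ccont Fs qF (\<lambda>b. norm (y b))" using F.ccont_dual y Y_def' by simp
  then obtain M where "\<forall>b\<in>B. norm (y b) \<le> M" using F.compact_bdd[OF ball_compact] by blast
  thus ?thesis unfolding bdd_above_def by (intro exI[of _ "max 0 M"]) auto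
qed

lemma sy_ge: "y \<in> Y \<Longrightarrow> b \<in> B \<Longrightarrow> norm (y b) \<le> sy y"
  unfolding sy_def by (rule cSup_upper[OF _ Y_bdd]) auto

lemma sy_nn: "y \<in> Y \<Longrightarrow> 0 \<le> sy y"
  unfolding sy_def by (rule cSup_upper[OF _ Y_bdd]) auto

lemma sy_le: "0 \<le> \<sigma> \<Longrightarrow> (\<forall>b\<in>B. norm (y b) \<le> \<sigma>) \<Longrightarrow> sy y \<le> \<sigma>"
  unfolding sy_def by (rule cSup_least) auto

lemma y_zero: "y \<in> Y \<Longrightarrow> y 0 = 0"
proof -
  assume y: "y \<in> Y"
  have "y (fscale (*) 0 0) = 0 * y 0" by (rule lo_sc[OF Y_lin[OF y] ls_0[OF F.V]])
  thus ?thesis by (simp add: fscale_0)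
qed

lemma scale_bound:
  assumes y: "y \<in> Y" and s: "0 \<le> \<sigma>" and bd: "\<forall>b\<in>B. norm (y b) \<le> \<sigma>" and b: "b \<in> Fn"
  shows "norm (y b) \<le> \<sigma> * N b"
proof (cases "N b = 0")
  case True
  hence "b = 0" using N_def0[OF b] by simp
  thus ?thesis using y_zero[OF y] True by simp
next
  case False
  hence Np: "N b > 0" using N_nn[OF b] by simp
  define b' where "b' = fscale (*) (of_real (1 / N b)) b"
  have b'F: "b' \<in> Fn" unfolding b'_def by (rule ls_sc[OF Fn_ls b])
  have "N b' = 1" unfolding b'_def using sn_sc[OF N_sn b] Np by (simp add: norm_divide)
  hence "b' \<in> B" using b'F unfolding ball_Fnu_def by simp
  hence h: "norm (y b') \<le> \<sigma>" using bd by blast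
  have "y b' = of_real (1 / N b) * y b" unfolding b'_def by (rule lo_sc[OF Y_lin[OF y]]) (use b Fn_sub in blast)
  hence "norm (y b') = norm (y b) / N b" using Np by (simp add: norm_divide)
  hence e: "norm (y b) = norm (y b') * N b" using Np by (simp add: field_simps)
  have "norm (y b') * N b \<le> \<sigma> * N b" by (rule mult_right_mono[OF h]) (use Np in simp)
  thus ?thesis using e by simp
qed


lemma eps_prod_0: "(\<lambda>_. 0) \<in> eps_prod smul p Fs qF"
proof -
  have p0: "p j 0 = 0" for j using E.p_sc[of j 0 0] by simp
  show ?thesis unfolding eps_prod_def lin_on_def sn_cont_def
    by (simp add: p0, rule exI[of _ "{}"], simp)
qed

lemma TKx_Y: "TKx Fs TK x \<in> Y"
  using cons eps_prod_0 unfolding consistent_fam_def by blast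

lemma TKx_apply: "b \<in> Fs \<Longrightarrow> TKx Fs TK x b = TK b x" by (simp add: TKx_def)

definition sU :: "('w \<Rightarrow> 'k) \<Rightarrow> real" where
  "sU b = Sup (insert 0 ((\<lambda>x. norm (TK b x) * \<nu> x) ` U))"

definition Cf :: real where
  "Cf = (SOME C. C > 0 \<and> (\<forall>f\<in>Fn. N f \<le> C * sU f))"

lemma Cf: "Cf > 0" "\<And>b. b \<in> Fn \<Longrightarrow> N b \<le> Cf * sU b"
proof -
  have "\<exists>C. C > 0 \<and> (\<forall>f\<in>Fn. N f \<le> C * sU f)" using fixU unfolding fixes_topology_def sU_def by blast
  hence "Cf > 0 \<and> (\<forall>f\<in>Fn. N f \<le> Cf * sU f)" unfolding Cf_def by (rule someI_ex)
  thus "Cf > 0" "\<And>b. b \<in> Fn \<Longrightarrow> N b \<le> Cf * sU b" by auto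
qed

lemma sU_bdd: assumes b: "b \<in> Fn" shows "bdd_above (insert 0 ((\<lambda>x. norm (TK b x) * \<nu> x) ` U))"
proof -
  have "\<forall>z\<in>insert 0 ((\<lambda>x. norm (TK b x) * \<nu> x) ` U). z \<le> max 0 (N b)"
  proof
    fix z assume "z \<in> insert 0 ((\<lambda>x. norm (TK b x) * \<nu> x) ` U)"
    then consider "z = 0" | x where "z = norm (TK b x) * \<nu> x" by blast
    thus "z \<le> max 0 (N b)"
    proof cases
      case 1 thus ?thesis by simp
    next
      case 2 thus ?thesis using TK_le_N[OF b, of x] by simp
    qed
  qed
  thus ?thesis unfolding bdd_above_def by blast
qed

lemma step2:
  assumes y: "y \<in> Y" and e: "\<epsilon> > 0"
  shows "\<exists>X. finite X \<and> X \<subseteq> U \<and>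
    (\<forall>b\<in>Fn. norm (y b) \<le> (Cf * sy y) * nrm X (\<lambda>x. of_real (\<nu> x) * TK b x) + \<epsilon> * N b)"
proof -
  define R where "R = Cf * sy y"
  have R: "R \<ge> 0" unfolding R_def using Cf(1) sy_nn[OF y] by simp
  define hh where "hh i b = (case i of None \<Rightarrow> norm (y b) | Some x \<Rightarrow> norm (y b) + (- (R * \<nu> x)) * norm (TKx Fs TK x b))" for i b
  define Opn where "Opn i = {b \<in> Fs. hh i b < \<epsilon>}" for i
  have cc: "ccont Fs qF (hh i)" for i
  proof (cases i)
    case None
    thus ?thesis unfolding hh_def using F.ccont_dual y Y_def' by simp
  next
    case (Some x)
    have y': "y \<in> sn_dual (fscale (*)) Fs qF" using y Y_def' by simp
    have t': "TKx Fs TK x \<in> sn_dual (fscale (*)) Fs qF" using TKx_Y Y_def' by simp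
    have c1: "ccont Fs qF (\<lambda>b. norm (y b) + (- (R * \<nu> x)) * norm (TKx Fs TK x b))"
      by (rule F.ccont_add[OF F.ccont_dual[OF y'] F.ccont_scale[OF F.ccont_dual[OF t']]])
    have "hh i = (\<lambda>b. norm (y b) + (- (R * \<nu> x)) * norm (TKx Fs TK x b))"
      unfolding hh_def Some by (rule ext) (simp only: option.case)
    thus ?thesis using c1 by simp
  qed
  have op: "\<forall>i\<in>insert None (Some ` U). sn_open Fs qF (Opn i)" unfolding Opn_def using F.ccont_open[OF cc] by blast
  have cov: "B \<subseteq> \<Union>(Opn ` insert None (Some ` U))"
  proof
    fix b assume bB: "b \<in> B"
    have bF: "b \<in> Fn" using bB B_sub by blast
    have bS: "b \<in> Fs" using bF Fn_sub by blast
    have yb: "norm (y b) \<le> sy y * N b"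
      by (rule scale_bound[OF y sy_nn[OF y] _ bF]) (use sy_ge[OF y] in blast)
    have "sy y * N b \<le> sy y * (Cf * sU b)" by (rule mult_left_mono[OF Cf(2)[OF bF] sy_nn[OF y]])
    also have "sy y * (Cf * sU b) = R * sU b" unfolding R_def by (simp add: mult_ac)
    finally have ybR: "norm (y b) \<le> R * sU b" using yb by linarith
    show "b \<in> \<Union>(Opn ` insert None (Some ` U))"
    proof (cases "norm (y b) < \<epsilon>")
      case True
      hence "b \<in> Opn None" unfolding Opn_def hh_def using bS by simp
      thus ?thesis by blast
    next
      case False
      hence ge: "\<epsilon> \<le> R * sU b" using ybR by simp
      hence Rp: "R > 0" using e R by (cases "R = 0") auto
      define \<delta> where "\<delta> = \<epsilon> / R"
      have dp: "\<delta> > 0" using e Rp by (simp add: \<delta>_def)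
      have "sU b - \<delta> < Sup (insert 0 ((\<lambda>x. norm (TK b x) * \<nu> x) ` U))" using dp unfolding sU_def by simp
      then obtain z where z: "z \<in> insert 0 ((\<lambda>x. norm (TK b x) * \<nu> x) ` U)" "sU b - \<delta> < z"
        using less_cSup_iff[OF _ sU_bdd[OF bF]] by blast
      have "z \<noteq> 0"
      proof
        assume "z = 0"
        hence "sU b < \<delta>" using z by simp
        hence "R * sU b < R * \<delta>" using Rp by simp
        also have "R * \<delta> = \<epsilon>" using Rp by (simp add: \<delta>_def)
        finally show False using ge by simp
      qed
      then obtain x where x: "x \<in> U" "z = norm (TK b x) * \<nu> x" using z by blast
      have "R * (sU b - \<delta>) < R * z" using z(2) Rp by simp
      hence "R * sU b - \<epsilon> < R * (norm (TK b x) * \<nu> x)" using Rp x by (simp add: \<delta>_def right_diff_distrib)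
      hence "hh (Some x) b < \<epsilon>" unfolding hh_def using ybR TKx_apply[OF bS] by (simp add: algebra_simps)
      hence "b \<in> Opn (Some x)" unfolding Opn_def using bS by simp
      thus ?thesis using x by blast
    qed
  qed
  obtain I where I: "I \<subseteq> insert None (Some ` U)" "finite I" "B \<subseteq> \<Union>(Opn ` I)"
    using F.compact_cover_idx[OF ball_compact op cov] by blast
  define X where "X = Some -` I"
  have finX: "finite X" unfolding X_def by (rule finite_vimageI[OF I(2)]) (simp add: inj_on_def)
  have XU: "X \<subseteq> U" unfolding X_def using I(1) by auto
  define Lb where "Lb b = (\<lambda>x. of_real (\<nu> x) * TK b x)" for b
  have onB: "norm (y b) \<le> R * nrm X (Lb b) + \<epsilon>" if bB: "b \<in> B" for b
  proof -
    have bS: "b \<in> Fs" using bB B_sub Fn_sub by blast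
    obtain i where i: "i \<in> I" "b \<in> Opn i" using I(3) bB by blast
    have nn: "0 \<le> R * nrm X (Lb b)" by (rule mult_nonneg_nonneg[OF R nrm_nonneg[OF finX]])
    show ?thesis
    proof (cases i)
      case None thus ?thesis using i nn unfolding Opn_def hh_def by simp
    next
      case (Some x)
      have xX: "x \<in> X" using i Some unfolding X_def by simp
      have lt: "norm (y b) - R * \<nu> x * norm (TK b x) < \<epsilon>"
        using i Some TKx_apply[OF bS] unfolding Opn_def hh_def by simp
      have "norm (Lb b x) = \<nu> x * norm (TK b x)" unfolding Lb_def using weight
        by (simp add: norm_mult) (metis abs_of_pos)
      hence "R * \<nu> x * norm (TK b x) \<le> R * nrm X (Lb b)"
        using nrm_ge[OF finX xX, of "Lb b"] R by (simp add: mult.assoc mult_left_mono)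
      thus ?thesis using lt by simp
    qed
  qed
  have "norm (y b) \<le> R * nrm X (Lb b) + \<epsilon> * N b" if bF: "b \<in> Fn" for b
  proof (cases "N b = 0")
    case True
    hence "b = 0" using N_def0[OF bF] by simp
    moreover have "0 \<le> R * nrm X (Lb b)" by (rule mult_nonneg_nonneg[OF R nrm_nonneg[OF finX]])
    ultimately show ?thesis using y_zero[OF y] True by simp
  next
    case False
    hence Np: "N b > 0" using N_nn[OF bF] by simp
    define b' where "b' = fscale (*) (of_real (1 / N b)) b"
    have bS: "b \<in> Fs" using bF Fn_sub by blast
    have b'F: "b' \<in> Fn" unfolding b'_def by (rule ls_sc[OF Fn_ls bF])
    have "N b' = 1" unfolding b'_def using sn_sc[OF N_sn bF] Np by (simp add: norm_divide)
    hence b'B: "b' \<in> B" using b'F unfolding ball_Fnu_def by simp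
    have yb': "y b' = of_real (1 / N b) * y b" unfolding b'_def by (rule lo_sc[OF Y_lin[OF y] bS])
    have Lb': "Lb b' = (\<lambda>x. of_real (1 / N b) * Lb b x)" unfolding Lb_def b'_def
      using TK_sc[OF bS] by (simp add: fun_eq_iff mult.left_commute)
    have nL: "nrm X (Lb b') = nrm X (Lb b) / N b"
      unfolding Lb' nrm_mult[OF finX] using Np by (simp add: norm_divide)
    have "norm (y b) / N b \<le> R * (nrm X (Lb b) / N b) + \<epsilon>"
      using onB[OF b'B] yb' nL Np by (simp add: norm_mult norm_divide)
    hence h: "(norm (y b) / N b) * N b \<le> (R * (nrm X (Lb b) / N b) + \<epsilon>) * N b"
      by (rule mult_right_mono) (use Np in simp)
    have e1: "(norm (y b) / N b) * N b = norm (y b)" using Np by simp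
    have e2: "(R * (nrm X (Lb b) / N b) + \<epsilon>) * N b = R * nrm X (Lb b) + \<epsilon> * N b"
      using Np by (simp add: distrib_right)
    show ?thesis using h unfolding e1 e2 .
  qed
  thus ?thesis using finX XU unfolding R_def Lb_def by blast
qed
end

context MS begin

interpretation E: ES smul p using E_mod E_lcHs by (simp add: ES_def ES_axioms_def)
interpretation F: FS Fs qF using F_lcHs by (simp add: FS_def)

lemma Y_sum: "finite X \<Longrightarrow> (\<lambda>g. \<Sum>x\<in>X. c x * TKx Fs TK x g) \<in> Y"
proof (induction X rule: finite_induct)
  case empty thus ?case using F.dual_zero Y_def' by simp
next
  case (insert x X)
  have t: "TKx Fs TK x \<in> sn_dual (fscale (*)) Fs qF" using TKx_Y Y_def' by simp
  have i: "(\<lambda>g. \<Sum>x\<in>X. c x * TKx Fs TK x g) \<in> sn_dual (fscale (*)) Fs qF" using insert.IH Y_def' by simp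
  have "(\<lambda>g. c x * TKx Fs TK x g + (\<Sum>x\<in>X. c x * TKx Fs TK x g)) \<in> sn_dual (fscale (*)) Fs qF"
    by (rule F.dual_add[OF F.dual_scale[OF t] i])
  thus ?case using insert.hyps Y_def' by simp
qed

definition resid :: "(('w \<Rightarrow> 'k) \<Rightarrow> 'k) \<Rightarrow> 'x set \<Rightarrow> ('x \<Rightarrow> 'k) \<Rightarrow> ('w \<Rightarrow> 'k) \<Rightarrow> 'k" where
  "resid y X a = (\<lambda>g. y g + (-1) * (\<Sum>x\<in>X. (a x * of_real (\<nu> x)) * TKx Fs TK x g))"

lemma resid_Y: assumes y: "y \<in> Y" and X: "finite X" shows "resid y X a \<in> Y"
proof -
  have y': "y \<in> sn_dual (fscale (*)) Fs qF" using y Y_def' by simp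
  have s: "(\<lambda>g. \<Sum>x\<in>X. (a x * of_real (\<nu> x)) * TKx Fs TK x g) \<in> sn_dual (fscale (*)) Fs qF"
    using Y_sum[OF X] Y_def' by simp
  have "resid y X a \<in> sn_dual (fscale (*)) Fs qF"
    unfolding resid_def by (rule F.dual_add[OF y' F.dual_scale[OF s]])
  thus ?thesis using Y_def' by simp
qed

lemma resid_apply: "b \<in> Fs \<Longrightarrow> resid y X a b = y b - (\<Sum>x\<in>X. a x * (of_real (\<nu> x) * TK b x))"
  unfolding resid_def by (simp add: TKx_apply mult.assoc)

definition stepP :: "(('w \<Rightarrow> 'k) \<Rightarrow> 'k) \<Rightarrow> 'x set \<Rightarrow> ('x \<Rightarrow> 'k) \<Rightarrow> bool" where
  "stepP y X a \<longleftrightarrow> finite X \<and> X \<subseteq> U \<and> (\<Sum>x\<in>X. norm (a x)) \<le> Cf * sy y \<and>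
     (\<forall>b\<in>Fn. norm (y b - (\<Sum>x\<in>X. a x * (of_real (\<nu> x) * TK b x))) \<le> (sy y / 2) * N b)"

lemma step_ex: assumes y: "y \<in> Y" shows "\<exists>X a. stepP y X a"
proof (cases "sy y = 0")
  case True
  have bd0: "\<forall>b\<in>B. norm (y b) \<le> 0" using sy_ge[OF y] True by simp
  have "norm (y b) \<le> 0 * N b" if bF: "b \<in> Fn" for b by (rule scale_bound[OF y order_refl bd0 bF])
  thus ?thesis unfolding stepP_def using True by (intro exI[of _ "{}"]) simp
next
  case False
  hence sp: "sy y > 0" using sy_nn[OF y] by simp
  obtain X where X: "finite X" "X \<subseteq> U"
    "\<forall>b\<in>Fn. norm (y b) \<le> (Cf * sy y) * nrm X (\<lambda>x. of_real (\<nu> x) * TK b x) + (sy y / 2) * N b"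
    using step2[OF y, of "sy y / 2"] sp by auto
  have ylin: "lin_on (fscale (*)) (*) Fn y" using Y_lin[OF y] Fn_sub unfolding lin_on_def by blast
  have Llin: "\<forall>x. lin_on (fscale (*)) (*) Fn (\<lambda>b. of_real (\<nu> x) * TK b x)"
    unfolding lin_on_def
  proof (intro allI conjI ballI)
    fix x b1 b2 assume b1: "b1 \<in> Fn" and b2: "b2 \<in> Fn"
    have "TK (b1 + b2) x = TK b1 x + TK b2 x" using TK_add b1 b2 Fn_sub by blast
    thus "of_real (\<nu> x) * TK (b1 + b2) x = of_real (\<nu> x) * TK b1 x + of_real (\<nu> x) * TK b2 x"
      by (simp add: distrib_left)
  next
    fix x c b assume b: "b \<in> Fn"
    have "TK (fscale (*) c b) x = c * TK b x" using TK_sc b Fn_sub by blast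
    thus "of_real (\<nu> x) * TK (fscale (*) c b) x = c * (of_real (\<nu> x) * TK b x)"
      by (simp add: mult.left_commute)
  qed
  have R: "Cf * sy y \<ge> 0" using Cf(1) sp by simp
  obtain a where a: "(\<Sum>x\<in>X. norm (a x)) \<le> Cf * sy y"
      "\<forall>b\<in>Fn. norm (y b - (\<Sum>x\<in>X. a x * (of_real (\<nu> x) * TK b x))) \<le> (sy y / 2) * N b"
    using fin_approx[OF Fn_ls fscale_0 ylin Llin N_sn X(1) R _ X(3)] sp by auto
  show ?thesis unfolding stepP_def using X a by blast
qed

lemma resid_sy:
  assumes y: "y \<in> Y" and st: "stepP y X a"
  shows "sy (resid y X a) \<le> sy y / 2"
proof (rule sy_le)
  show "0 \<le> sy y / 2" using sy_nn[OF y] by simp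
  show "\<forall>b\<in>B. norm (resid y X a b) \<le> sy y / 2"
  proof
    fix b assume bB: "b \<in> B"
    have bF: "b \<in> Fn" using bB B_sub by blast
    have "norm (resid y X a b) = norm (y b - (\<Sum>x\<in>X. a x * (of_real (\<nu> x) * TK b x)))"
      using resid_apply bF Fn_sub by auto
    also have "\<dots> \<le> (sy y / 2) * N b" using st bF unfolding stepP_def by blast
    also have "\<dots> \<le> (sy y / 2) * 1" by (rule mult_left_mono[OF B_N[OF bB]]) (use sy_nn[OF y] in simp)
    finally show "norm (resid y X a b) \<le> sy y / 2" by simp
  qed
qed

definition stp :: "(('w \<Rightarrow> 'k) \<Rightarrow> 'k) \<Rightarrow> 'x set \<times> ('x \<Rightarrow> 'k)" where
  "stp y = (SOME Xa. stepP y (fst Xa) (snd Xa))"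

lemma stp: "y \<in> Y \<Longrightarrow> stepP y (fst (stp y)) (snd (stp y))"
proof -
  assume y: "y \<in> Y"
  then obtain X a where "stepP y X a" using step_ex by blast
  hence "\<exists>Xa. stepP y (fst Xa) (snd Xa)" by (intro exI[of _ "(X, a)"]) simp
  thus ?thesis unfolding stp_def by (rule someI_ex)
qed

definition RR :: "(('w \<Rightarrow> 'k) \<Rightarrow> 'k) \<Rightarrow> ('w \<Rightarrow> 'k) \<Rightarrow> 'k" where
  "RR y = resid y (fst (stp y)) (snd (stp y))"

definition yseq :: "(('w \<Rightarrow> 'k) \<Rightarrow> 'k) \<Rightarrow> nat \<Rightarrow> ('w \<Rightarrow> 'k) \<Rightarrow> 'k" where
  "yseq y0 n = (RR ^^ n) y0"

lemma yseq_0: "yseq y0 0 = y0" by (simp add: yseq_def)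
lemma yseq_Suc: "yseq y0 (Suc n) = RR (yseq y0 n)" by (simp add: yseq_def)

lemma yseq_Y: "y0 \<in> Y \<Longrightarrow> yseq y0 n \<in> Y"
proof (induction n)
  case 0 thus ?case by (simp add: yseq_0)
next
  case (Suc n)
  have "stepP (yseq y0 n) (fst (stp (yseq y0 n))) (snd (stp (yseq y0 n)))" by (rule stp[OF Suc.IH[OF Suc.prems]])
  hence "finite (fst (stp (yseq y0 n)))" unfolding stepP_def by blast
  thus ?case unfolding yseq_Suc RR_def by (rule resid_Y[OF Suc.IH[OF Suc.prems]])
qed

lemma yseq_sy: "y0 \<in> Y \<Longrightarrow> sy (yseq y0 n) \<le> sy y0 * (1/2)^n"
proof (induction n)
  case 0 thus ?case by (simp add: yseq_0)
next
  case (Suc n)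
  have yn: "yseq y0 n \<in> Y" by (rule yseq_Y[OF Suc.prems])
  have "sy (yseq y0 (Suc n)) \<le> sy (yseq y0 n) / 2"
    unfolding yseq_Suc RR_def by (rule resid_sy[OF yn stp[OF yn]])
  also have "\<dots> \<le> sy y0 * (1/2)^n / 2" using Suc.IH[OF Suc.prems] by simp
  finally show ?case by simp
qed

end

context MS begin

interpretation E: ES smul p using E_mod E_lcHs by (simp add: ES_def ES_axioms_def)
interpretation F: FS Fs qF using F_lcHs by (simp add: FS_def)

definition dv :: "'x \<Rightarrow> 'e" where "dv x = smul (of_real (\<nu> x)) (f x)"
definition Mp :: "'a \<Rightarrow> real" where "Mp a = Sup (insert 0 ((\<lambda>x. p a (dv x)) ` U))"
abbreviation "DD \<equiv> E.Dset Mp"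
abbreviation "gg \<equiv> gauge_fn smul DD"
abbreviation "VV \<equiv> E.ED DD"

lemma f_G: "f \<in> FnuG Fs TK \<nu> G U" using f_in by (simp add: FnuG_lb_def)

lemma Mp_bdd: "bdd_above (insert 0 ((\<lambda>x. p a (dv x)) ` U))"
proof -
  have "sn_bounded UNIV p ((\<lambda>x. smul (of_real (\<nu> x)) (f x)) ` U)" using f_in by (simp add: FnuG_lb_def)
  then obtain C where "\<forall>v\<in>(\<lambda>x. smul (of_real (\<nu> x)) (f x)) ` U. p a v \<le> C" unfolding sn_bounded_def by blast
  hence "\<forall>x\<in>U. p a (dv x) \<le> C" unfolding dv_def by blast
  thus ?thesis unfolding bdd_above_def by (intro exI[of _ "max 0 C"]) auto
qed

lemma dv_le: "x \<in> U \<Longrightarrow> p a (dv x) \<le> Mp a"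
  unfolding Mp_def by (rule cSup_upper[OF _ Mp_bdd]) simp

lemma Mp_nn: "0 \<le> Mp a"
  unfolding Mp_def by (rule cSup_upper[OF _ Mp_bdd]) simp

lemma dv_D: "x \<in> U \<Longrightarrow> dv x \<in> DD" unfolding E.Dset_def using dv_le by blast
lemma D0: "0 \<in> DD" using E.D_0 Mp_nn by blast

lemma ban: "sn_banach smul VV gg"
proof -
  have "DD \<noteq> {}" using D0 by blast
  moreover have "abs_convex smul DD" using E.D_absconv Mp_nn by blast
  ultimately show ?thesis using E_lc E.D_closed E.D_bounded unfolding locally_complete_def E.ED_def by blast
qed

lemma VV_ls: "lin_subspace smul VV" using ban by (simp add: sn_banach_def)
lemma gg_sn: "is_seminorm_on smul VV gg" using ban by (simp add: sn_banach_def)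

lemma sum_dv:
  assumes "finite X" "X \<subseteq> U"
  shows "(\<Sum>x\<in>X. smul (c x) (dv x)) \<in> VV \<and> gg (\<Sum>x\<in>X. smul (c x) (dv x)) \<le> (\<Sum>x\<in>X. norm (c x))"
  using assms
proof (induction X rule: finite_induct)
  case empty
  have "gg 0 = gg (smul 0 0)" by simp
  also have "\<dots> = 0" using sn_sc[OF gg_sn ls_0[OF VV_ls], of 0] by simp
  finally show ?case using ls_0[OF VV_ls] by simp
next
  case (insert x X)
  have xU: "x \<in> U" and XU: "X \<subseteq> U" using insert.prems by auto
  have dvV: "dv x \<in> VV" by (rule E.D_in_ED[OF dv_D[OF xU]])
  have t1: "smul (c x) (dv x) \<in> VV" by (rule ls_sc[OF VV_ls dvV])
  have IH: "(\<Sum>x\<in>X. smul (c x) (dv x)) \<in> VV" "gg (\<Sum>x\<in>X. smul (c x) (dv x)) \<le> (\<Sum>x\<in>X. norm (c x))"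
    using insert.IH[OF XU] by auto
  have s: "(\<Sum>x\<in>insert x X. smul (c x) (dv x)) = smul (c x) (dv x) + (\<Sum>x\<in>X. smul (c x) (dv x))"
    using insert.hyps by simp
  have "gg (smul (c x) (dv x) + (\<Sum>x\<in>X. smul (c x) (dv x))) \<le> gg (smul (c x) (dv x)) + gg (\<Sum>x\<in>X. smul (c x) (dv x))"
    by (rule sn_add[OF gg_sn t1 IH(1)])
  also have "gg (smul (c x) (dv x)) = norm (c x) * gg (dv x)" by (rule sn_sc[OF gg_sn dvV])
  also have "\<dots> \<le> norm (c x) * 1" by (rule mult_left_mono[OF E.gauge_le1[OF dv_D[OF xU]]]) simp
  finally have "gg (smul (c x) (dv x) + (\<Sum>x\<in>X. smul (c x) (dv x))) \<le> norm (c x) + (\<Sum>x\<in>X. norm (c x))"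
    using IH(2) by simp
  moreover have "smul (c x) (dv x) + (\<Sum>x\<in>X. smul (c x) (dv x)) \<in> VV" by (rule ls_add[OF VV_ls t1 IH(1)])
  ultimately show ?case unfolding s using insert.hyps by simp
qed

lemma p_gauge: "v \<in> VV \<Longrightarrow> p a v \<le> Mp a * gg v"
  by (rule E.gauge_bound[OF D0 _ Mp_nn]) (auto simp: E.p_sc E.Dset_def)

lemma G_lin: "e' \<in> G \<Longrightarrow> lin_on smul (*) UNIV e'" using G_sub by (auto simp: sn_dual_def)

lemma G_gauge: assumes e': "e' \<in> G" shows "\<exists>K\<ge>0. \<forall>v\<in>VV. norm (e' v) \<le> K * gg v"
proof -
  obtain J C where JC: "finite J" "\<forall>x\<in>UNIV. norm (e' x) \<le> C * (\<Sum>i\<in>J. p i x)"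
    using e' G_sub unfolding sn_dual_def sn_cont_def by blast
  define K where "K = \<bar>C\<bar> * (\<Sum>j\<in>J. Mp j)"
  have K: "K \<ge> 0" unfolding K_def by (simp add: sum_nonneg Mp_nn)
  have bd: "norm (e' d) \<le> K" if d: "d \<in> DD" for d
  proof -
    have "norm (e' d) \<le> C * (\<Sum>i\<in>J. p i d)" using JC by blast
    also have "\<dots> \<le> \<bar>C\<bar> * (\<Sum>i\<in>J. p i d)" by (rule mult_right_mono) (simp_all add: sum_nonneg E.p_nn)
    also have "\<dots> \<le> \<bar>C\<bar> * (\<Sum>j\<in>J. Mp j)"
      by (rule mult_left_mono) (use d in \<open>simp_all add: sum_mono E.Dset_def\<close>)
    finally show ?thesis unfolding K_def .
  qed
  have hom: "norm (e' (smul (of_real t) w)) = t * norm (e' w)" if "t > 0" for t w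
    using lo_sc[OF G_lin[OF e'], of w "of_real t"] that by (simp add: norm_mult)
  have "norm (e' v) \<le> K * gg v" if v: "v \<in> VV" for v
    by (rule E.gauge_bound[OF D0 v K, where \<phi>="\<lambda>v. norm (e' v)"]) (use hom bd in auto)
  thus ?thesis using K by blast
qed

definition gsel :: "('e \<Rightarrow> 'k) \<Rightarrow> 'w \<Rightarrow> 'k" where
  "gsel e' = (SOME g. g \<in> Fn \<and> (\<forall>x\<in>U. TK g x = e' (f x)))"

lemma gsel: "e' \<in> G \<Longrightarrow> gsel e' \<in> Fn \<and> (\<forall>x\<in>U. TK (gsel e') x = e' (f x))"
proof -
  assume e': "e' \<in> G"
  hence "\<exists>g. g \<in> Fn \<and> (\<forall>x\<in>U. TK g x = e' (f x))" using f_G unfolding FnuG_def by blast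
  thus ?thesis unfolding gsel_def by (rule someI_ex)
qed

end

context MS begin

interpretation E: ES smul p using E_mod E_lcHs by (simp add: ES_def ES_axioms_def)
interpretation F: FS Fs qF using F_lcHs by (simp add: FS_def)

lemma G_add: "e' \<in> G \<Longrightarrow> e' (v1 + v2) = e' v1 + e' v2" using lo_add[OF G_lin] by blast
lemma G_sc: "e' \<in> G \<Longrightarrow> e' (smul c v) = c * e' v" using lo_sc[OF G_lin] by blast
lemma G_diff: "e' \<in> G \<Longrightarrow> e' (v1 - v2) = e' v1 - e' v2"
proof -
  assume e: "e' \<in> G"
  have "e' v1 = e' ((v1 - v2) + v2)" by simp
  also have "\<dots> = e' (v1 - v2) + e' v2" by (rule G_add[OF e])
  finally show ?thesis by simp
qed
lemma G_sum: "e' \<in> G \<Longrightarrow> e' (\<Sum>x\<in>X. h x) = (\<Sum>x\<in>X. e' (h x))"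
proof (induction X rule: infinite_finite_induct)
  case (infinite A) thus ?case using G_sc[of e' 0 0] by simp
next
  case empty thus ?case using G_sc[of e' 0 0] by simp
next
  case (insert x F)
  have "e' (h x + sum h F) = e' (h x) + e' (sum h F)" by (rule G_add[OF insert.prems])
  thus ?case using insert.IH[OF insert.prems] insert.hyps by simp
qed

lemma exists_e:
  assumes y0: "y0 \<in> Y"
  shows "\<exists>e. (\<forall>e'\<in>G. e' e = y0 (gsel e')) \<and> (\<forall>a. p a e \<le> 2 * Cf * sy y0 * Mp a)"
proof -
  define Xn where "Xn n = fst (stp (yseq y0 n))" for n
  define an where "an n = snd (stp (yseq y0 n))" for n
  have st: "stepP (yseq y0 n) (Xn n) (an n)" for n unfolding Xn_def an_def by (rule stp[OF yseq_Y[OF y0]])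
  have fX: "finite (Xn n)" and XU: "Xn n \<subseteq> U" and sa: "(\<Sum>x\<in>Xn n. norm (an n x)) \<le> Cf * sy (yseq y0 n)" for n
    using st[of n] unfolding stepP_def by blast+
  define w where "w n = (\<Sum>x\<in>Xn n. smul (an n x) (dv x))" for n
  define A where "A = Cf * sy y0"
  have wV: "w n \<in> VV" for n unfolding w_def using sum_dv[OF fX XU] by blast
  have wb: "gg (w n) \<le> A * (1/2)^n" for n
  proof -
    have "gg (w n) \<le> (\<Sum>x\<in>Xn n. norm (an n x))" unfolding w_def using sum_dv[OF fX XU] by blast
    also have "\<dots> \<le> Cf * sy (yseq y0 n)" by (rule sa)
    also have "\<dots> \<le> Cf * (sy y0 * (1/2)^n)" by (rule mult_left_mono[OF yseq_sy[OF y0]]) (use Cf(1) in simp)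
    finally show ?thesis unfolding A_def by (simp add: mult.assoc)
  qed
  obtain e where e: "e \<in> VV" "(\<lambda>m. gg ((\<Sum>n<m. w n) - e)) \<longlonglongrightarrow> 0" "gg e \<le> 2 * A"
    using E.series_limit[OF ban wV wb] by blast
  have pe: "p a e \<le> 2 * Cf * sy y0 * Mp a" for a
  proof -
    have "p a e \<le> Mp a * gg e" by (rule p_gauge[OF e(1)])
    also have "\<dots> \<le> Mp a * (2 * A)" by (rule mult_left_mono[OF e(3) Mp_nn])
    finally show ?thesis unfolding A_def by (simp add: mult_ac)
  qed
  have ge: "e' e = y0 (gsel e')" if e': "e' \<in> G" for e'
  proof -
    define g0 where "g0 = gsel e'"
    have g0F: "g0 \<in> Fn" and g0U: "\<forall>x\<in>U. TK g0 x = e' (f x)" using gsel[OF e'] unfolding g0_def by auto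
    have g0S: "g0 \<in> Fs" using g0F Fn_sub by blast
    obtain K where K: "K \<ge> 0" "\<forall>v\<in>VV. norm (e' v) \<le> K * gg v" using G_gauge[OF e'] by blast
    have ew: "e' (w n) = yseq y0 n g0 - yseq y0 (Suc n) g0" for n
    proof -
      have "e' (w n) = (\<Sum>x\<in>Xn n. e' (smul (an n x) (dv x)))" unfolding w_def by (rule G_sum[OF e'])
      also have "\<dots> = (\<Sum>x\<in>Xn n. an n x * (of_real (\<nu> x) * e' (f x)))"
        by (rule sum.cong[OF refl]) (simp only: G_sc[OF e'] dv_def)
      also have "\<dots> = (\<Sum>x\<in>Xn n. an n x * (of_real (\<nu> x) * TK g0 x))"
      proof (rule sum.cong[OF refl])
        fix x assume "x \<in> Xn n"
        hence "x \<in> U" using XU by blast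
        hence "TK g0 x = e' (f x)" using g0U by blast
        thus "an n x * (of_real (\<nu> x) * e' (f x)) = an n x * (of_real (\<nu> x) * TK g0 x)" by simp
      qed
      also have "\<dots> = yseq y0 n g0 - yseq y0 (Suc n) g0"
        unfolding yseq_Suc RR_def using resid_apply[OF g0S] Xn_def an_def by simp
      finally show ?thesis .
    qed
    have eS: "e' (\<Sum>n<m. w n) = y0 g0 - yseq y0 m g0" for m
    proof -
      have "e' (\<Sum>n<m. w n) = (\<Sum>n<m. e' (w n))" by (rule G_sum[OF e'])
      also have "\<dots> = (\<Sum>n<m. yseq y0 n g0 - yseq y0 (Suc n) g0)" by (simp only: ew)
      also have "\<dots> = yseq y0 0 g0 - yseq y0 m g0" by (rule sum_lessThan_telescope')
      finally show ?thesis by (simp add: yseq_0)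
    qed
    have yN: "norm (yseq y0 m g0) \<le> (sy y0 * N g0) * (1/2)^m" for m
    proof -
      have yY: "yseq y0 m \<in> Y" by (rule yseq_Y[OF y0])
      have "norm (yseq y0 m g0) \<le> sy (yseq y0 m) * N g0"
        by (rule scale_bound[OF yY sy_nn[OF yY] _ g0F]) (use sy_ge[OF yY] in blast)
      also have "\<dots> \<le> (sy y0 * (1/2)^m) * N g0" by (rule mult_right_mono[OF yseq_sy[OF y0] N_nn[OF g0F]])
      finally show ?thesis by (simp add: mult_ac)
    qed
    have bnd: "norm (e' e - y0 g0) \<le> K * gg ((\<Sum>n<m. w n) - e) + (sy y0 * N g0) * (1/2)^m" for m
    proof -
      have SV: "(\<Sum>n<m. w n) \<in> VV"
      proof -
        have "(\<Sum>n\<in>F. w n) \<in> VV" if "finite F" for F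
          using that by (induction F rule: finite_induct) (simp_all add: ls_0[OF VV_ls] ls_add[OF VV_ls] wV)
        thus ?thesis by simp
      qed
      have dV: "(\<Sum>n<m. w n) - e \<in> VV"
      proof -
        have "(\<Sum>n<m. w n) + smul (-1) e \<in> VV" by (rule ls_add[OF VV_ls SV ls_sc[OF VV_ls e(1)]])
        thus ?thesis by simp
      qed
      have "e' e - y0 g0 = - e' ((\<Sum>n<m. w n) - e) - yseq y0 m g0"
        using G_diff[OF e', of "(\<Sum>n<m. w n)" e] eS[of m] by (simp add: algebra_simps)
      hence "norm (e' e - y0 g0) \<le> norm (e' ((\<Sum>n<m. w n) - e)) + norm (yseq y0 m g0)"
        by (metis norm_minus_cancel norm_triangle_ineq4)
      also have "\<dots> \<le> K * gg ((\<Sum>n<m. w n) - e) + (sy y0 * N g0) * (1/2)^m"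
        by (rule add_mono) (use K(2) dV yN in blast)+
      finally show ?thesis .
    qed
    have lim: "(\<lambda>m. K * gg ((\<Sum>n<m. w n) - e) + (sy y0 * N g0) * (1/2)^m) \<longlonglongrightarrow> 0"
      by (rule tendsto_add_zero[OF tendsto_mult_right_zero[OF e(2)] tendsto_mult_right_zero[OF LIMSEQ_power_zero]]) simp
    have "norm (e' e - y0 g0) \<le> 0"
      by (rule LIMSEQ_le_const[OF lim]) (use bnd in blast)
    thus ?thesis unfolding g0_def by simp
  qed
  show ?thesis using ge pe by blast
qed

end

context MS begin

interpretation E: ES smul p using E_mod E_lcHs by (simp add: ES_def ES_axioms_def)
interpretation F: FS Fs qF using F_lcHs by (simp add: FS_def)

lemma G_uniq: assumes "\<forall>e'\<in>G. e' a = e' b" shows "a = b"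
proof -
  have "\<forall>e'\<in>G. e' (a - b) = 0"
  proof
    fix e' assume e': "e' \<in> G"
    show "e' (a - b) = 0" using G_diff[OF e', of a b] assms e' by simp
  qed
  hence "a - b = 0" using G_sep unfolding separating_def by blast
  thus ?thesis by simp
qed

definition uu :: "(('w \<Rightarrow> 'k) \<Rightarrow> 'k) \<Rightarrow> 'e" where
  "uu y = (if y \<in> Y then (THE e. \<forall>e'\<in>G. e' e = y (gsel e')) else 0)"

lemma uu_prop:
  assumes y: "y \<in> Y"
  shows "(\<forall>e'\<in>G. e' (uu y) = y (gsel e')) \<and> (\<forall>a. p a (uu y) \<le> 2 * Cf * sy y * Mp a)"
proof -
  obtain e where e: "\<forall>e'\<in>G. e' e = y (gsel e')" "\<forall>a. p a e \<le> 2 * Cf * sy y * Mp a"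
    using exists_e[OF y] by blast
  have "(THE e. \<forall>e'\<in>G. e' e = y (gsel e')) = e"
  proof (rule the_equality)
    show "\<forall>e'\<in>G. e' e = y (gsel e')" by (rule e(1))
  next
    fix x assume "\<forall>e'\<in>G. e' x = y (gsel e')"
    hence "\<forall>e'\<in>G. e' x = e' e" using e(1) by simp
    thus "x = e" by (rule G_uniq)
  qed
  thus ?thesis using e y unfolding uu_def by simp
qed

lemma uu_char: "y \<in> Y \<Longrightarrow> (\<forall>e'\<in>G. e' v = y (gsel e')) \<Longrightarrow> uu y = v"
  using uu_prop G_uniq by metis

lemma Y_add: "y1 \<in> Y \<Longrightarrow> y2 \<in> Y \<Longrightarrow> y1 + y2 \<in> Y"
proof -
  assume a: "y1 \<in> Y" "y2 \<in> Y"
  have "(\<lambda>f. y1 f + y2 f) \<in> sn_dual (fscale (*)) Fs qF" using F.dual_add a Y_def' by simp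
  moreover have "y1 + y2 = (\<lambda>f. y1 f + y2 f)" by (simp add: fun_eq_iff)
  ultimately show ?thesis using Y_def' by simp
qed

lemma Y_sc: "y \<in> Y \<Longrightarrow> fscale (*) c y \<in> Y"
proof -
  assume a: "y \<in> Y"
  have "(\<lambda>f. c * y f) \<in> sn_dual (fscale (*)) Fs qF" using F.dual_scale a Y_def' by simp
  thus ?thesis using Y_def' by (simp add: fscale_def)
qed

lemma kappa_B: "kappa_sn Fs qF B y = sy y"
  unfolding kappa_sn_def sy_def using ball_compact B_absconv by simp

lemma uu_eps: "uu \<in> eps_prod smul p Fs qF"
  unfolding eps_prod_def
proof (intro CollectI conjI)
  show "lin_on (fscale (*)) smul Y uu"
    unfolding lin_on_def
  proof (intro conjI ballI allI)
    fix y1 y2 assume y1: "y1 \<in> Y" and y2: "y2 \<in> Y"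
    have "\<forall>e'\<in>G. e' (uu y1 + uu y2) = (y1 + y2) (gsel e')"
      using uu_prop[OF y1] uu_prop[OF y2] G_add by simp
    thus "uu (y1 + y2) = uu y1 + uu y2" by (rule uu_char[OF Y_add[OF y1 y2]])
  next
    fix c y assume y: "y \<in> Y"
    have "\<forall>e'\<in>G. e' (smul c (uu y)) = fscale (*) c y (gsel e')"
      using uu_prop[OF y] G_sc by (simp add: fscale_def)
    thus "uu (fscale (*) c y) = smul c (uu y)" by (rule uu_char[OF Y_sc[OF y]])
  qed
  show "sn_cont Y (kappa_sn Fs qF) p uu"
    unfolding sn_cont_def
  proof
    fix a
    have "\<forall>y\<in>Y. p a (uu y) \<le> (2 * Cf * Mp a) * (\<Sum>K\<in>{B}. kappa_sn Fs qF K y)"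
      using uu_prop by (simp add: kappa_B mult_ac)
    thus "\<exists>J C. finite J \<and> (\<forall>y\<in>Y. p a (uu y) \<le> C * (\<Sum>K\<in>J. kappa_sn Fs qF K y))"
      by (intro exI[of _ "{B}"] exI[of _ "2 * Cf * Mp a"]) simp
  qed
  show "\<forall>y. y \<notin> Y \<longrightarrow> uu y = 0" by (simp add: uu_def)
qed

lemma main_result: "\<exists>F\<in>F_eps_nu smul p Fs qF TK \<nu>. \<forall>x\<in>U. TE F x = f x"
proof
  show "S_map Fs uu \<in> F_eps_nu smul p Fs qF TK \<nu>"
    unfolding F_eps_nu_def
  proof (rule imageI, intro CollectI conjI)
    show "uu \<in> eps_prod smul p Fs qF" by (rule uu_eps)
    show "sn_bounded UNIV p (uu ` polar_ball Fs qF TK \<nu>)"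
      unfolding sn_bounded_def
    proof (intro conjI allI)
      fix a
      have "p a (uu y) \<le> 2 * Cf * Mp a" if y: "y \<in> polar_ball Fs qF TK \<nu>" for y
      proof -
        have yY: "y \<in> Y" and b1: "\<forall>b\<in>B. norm (y b) \<le> 1" using y unfolding polar_ball_def by auto
        have "sy y \<le> 1" by (rule sy_le) (use b1 in auto)
        hence "2 * Cf * sy y * Mp a \<le> 2 * Cf * 1 * Mp a"
          using Cf(1) Mp_nn by (intro mult_right_mono mult_left_mono) auto
        moreover have "p a (uu y) \<le> 2 * Cf * sy y * Mp a" using uu_prop[OF yY] by blast
        ultimately show ?thesis by simp
      qed
      thus "\<exists>C. \<forall>v\<in>uu ` polar_ball Fs qF TK \<nu>. p a v \<le> C" by blast
    qed simp
  qed
  show "\<forall>x\<in>U. TE (S_map Fs uu) x = f x"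
  proof
    fix x assume x: "x \<in> U"
    have "TE (S_map Fs uu) x = uu (TKx Fs TK x)" using cons uu_eps unfolding consistent_fam_def by blast
    also have "\<dots> = f x"
    proof (rule uu_char[OF TKx_Y])
      show "\<forall>e'\<in>G. e' (f x) = TKx Fs TK x (gsel e')"
      proof
        fix e' assume e': "e' \<in> G"
        have "gsel e' \<in> Fs" using gsel[OF e'] Fn_sub by blast
        thus "e' (f x) = TKx Fs TK x (gsel e')" using gsel[OF e'] x by (simp add: TKx_apply)
      qed
    qed
    finally show "TE (S_map Fs uu) x = f x" .
  qed
qed

end

theorem mainTheorem2:
  fixes smul :: "'k::{real_normed_field,euclidean_space} \<Rightarrow> 'e::ab_group_add \<Rightarrow> 'e"
    and p :: "'a \<Rightarrow> 'e \<Rightarrow> real"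
    and G :: "('e \<Rightarrow> 'k) set"
    and Fs :: "('w \<Rightarrow> 'k) set" and qF :: "'i \<Rightarrow> ('w \<Rightarrow> 'k) \<Rightarrow> real"
    and FE :: "('w \<Rightarrow> 'e) set" and qFE :: "'j \<Rightarrow> ('w \<Rightarrow> 'e) \<Rightarrow> real"
    and TK :: "('w \<Rightarrow> 'k) \<Rightarrow> 'x \<Rightarrow> 'k" and TE :: "('w \<Rightarrow> 'e) \<Rightarrow> 'x \<Rightarrow> 'e"
    and \<nu> :: "'x \<Rightarrow> real" and U :: "'x set" and f :: "'x \<Rightarrow> 'e"
  assumes E_vs: "vector_space smul"
    and E_lcHs: "lcHs smul UNIV p" and E_dir: "directed_family p UNIV"
    and E_lc: "locally_complete smul p"
    and G_sub: "G \<subseteq> sn_dual smul UNIV p" and G_lin: "lin_subspace (fscale (*)) G"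
    and G_sep: "separating G"
    and F_lcHs: "lcHs (fscale (*)) Fs qF"
    and FE_lcHs: "lcHs (fscale smul) FE qFE"
    and delta_dual: "\<forall>x. delta Fs x \<in> Fdual Fs qF"
    and compat: "eps_into_compatible smul p Fs qF FE qFE"
    and TK_lin: "lin_on (fscale (*)) (fscale (*)) Fs TK"
    and TE_lin: "lin_on (fscale smul) (fscale smul) FE TE"
    and cons: "consistent_fam smul p Fs qF FE TE TK"
    and strong: "strong_fam smul p Fs FE TE TK"
    and weight: "\<forall>x. \<nu> x > 0"
    and banach: "sn_banach (fscale (*)) (Fnu Fs TK \<nu>) (Fnu_norm TK \<nu>)"
    and ball_compact: "sn_compact Fs qF (ball_Fnu Fs TK \<nu>)"
    and fixU: "fixes_topology Fs TK \<nu> U"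
    and f_in: "f \<in> FnuG_lb smul p Fs TK \<nu> G U"
  shows "\<exists>F\<in>F_eps_nu smul p Fs qF TK \<nu>. \<forall>x\<in>U. TE F x = f x"
proof -
  have M: "MS smul p G Fs qF FE TK TE \<nu> U f"
    unfolding MS_def using E_vs E_lcHs E_lc G_sub G_sep F_lcHs TK_lin cons weight banach ball_compact fixU f_in
    by (simp add: module_iff_vector_space)
  show ?thesis by (rule MS.main_result[OF M])
qed

end
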